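(* Let $\mathbb{P}$ be the Exponential(1) distribution, $x^1=1$, $C(x)=\frac12x^2$ (so $c(x)=x$), and $\beta\in(0,1)$. Let $\boldsymbol{p}_1,\ldots,\boldsymbol{p}_N$ be i.i.d. samples from $\mathbb{P}$ determining the SDP policy $y_{\mathrm{S}}(x,p)=\bigl(\beta\frac1N\sum_{i=1}^N(\boldsymbol{p}_i-p)_+-(1-\beta)p\bigr)_{[0,x]}$ and the MPC policy $y_{\mathrm{M}}(x,p)=\bigl(\beta(\mu_N-p)_+-(1-\beta)p\bigr)_{[0,x]}$ with $\mu_N=\frac1N\sum_{i=1}^N\boldsymbol{p}_i$. For each $N\ge2$, as $\beta\to1$ the expected out-of-sample performance $\mathbb{E}_{\mathbb{P}^N}[\bar V_{\mathrm{S}}(1;\boldsymbol{p}_1,\ldots,\boldsymbol{p}_N)]$ of SDP is unbounded below, while the expected out-of-sample performance $\mathbb{E}_{\mathbb{P}^N}[\bar V_{\mathrm{M}}(1;\boldsymbol{p}_1,\ldots,\boldsymbol{p}_N)]$ of MPC remains bounded.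
   Context: $(z)_{[a,b]}$ is the projection of $z$ onto $[a,b]$ and $(z)_+=\max\{z,0\}$. For fixed samples $p_1,\ldots,p_N$ and a policy $y$, the out-of-sample value is $\bar V_y(x;p_1,\ldots,p_N)=\mathbb{E}_{\mathbb{P}^\infty}[\sum_{t=1}^\infty\beta^{t-1}(\boldsymbol{p}^t(x^t-x^{t+1})-\frac12(x^{t+1})^2)]$ with $x^1=x$, $x^{t+1}=y(x^t,\boldsymbol{p}^t)$, where $\boldsymbol{p}^1,\boldsymbol{p}^2,\ldots$ are i.i.d. Exponential(1) independent of the samples; $\bar V_{\mathrm{S}},\bar V_{\mathrm{M}}$ are these for $y_{\mathrm{S}},y_{\mathrm{M}}$. "Unbounded below as $\beta\to1$" means the values become arbitrarily negative for $\beta$ sufficiently close to $1$. *)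

theory Defs
  imports "HOL-Probability.Probability"
begin

definition Pexp :: "real measure" where
  "Pexp = density lborel (\<lambda>x. ennreal (exponential_density 1 x))"

definition proj :: "real \<Rightarrow> real \<Rightarrow> real \<Rightarrow> real" where
  "proj a b z = max a (min b z)"

definition pos :: "real \<Rightarrow> real" where
  "pos z = max z 0"

definition yS :: "real \<Rightarrow> nat \<Rightarrow> (nat \<Rightarrow> real) \<Rightarrow> real \<Rightarrow> real \<Rightarrow> real" where
  "yS \<beta> N ps x p =
     proj 0 x (\<beta> * ((1 / real N) * (\<Sum>i<N. pos (ps i - p))) - (1 - \<beta>) * p)"

definition yM :: "real \<Rightarrow> nat \<Rightarrow> (nat \<Rightarrow> real) \<Rightarrow> real \<Rightarrow> real \<Rightarrow> real" where
  "yM \<beta> N ps x p =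
     proj 0 x (\<beta> * pos ((1 / real N) * (\<Sum>i<N. ps i) - p) - (1 - \<beta>) * p)"

text \<open>Inventory trajectory: traj y x \<omega> t is x^(t+1) in the paper's 1-based indexing,
  with prices \<omega> t = p^(t+1).\<close>
primrec traj :: "(real \<Rightarrow> real \<Rightarrow> real) \<Rightarrow> real \<Rightarrow> (nat \<Rightarrow> real) \<Rightarrow> nat \<Rightarrow> real" where
  "traj y x \<omega> 0 = x"
| "traj y x \<omega> (Suc t) = y (traj y x \<omega> t) (\<omega> t)"

definition Vbar :: "real \<Rightarrow> (real \<Rightarrow> real \<Rightarrow> real) \<Rightarrow> real \<Rightarrow> real" where
  "Vbar \<beta> y x = integral\<^sup>L (Pi\<^sub>M UNIV (\<lambda>_::nat. Pexp))
     (\<lambda>\<omega>. \<Sum>t. \<beta> ^ t * (\<omega> t * (traj y x \<omega> t - traj y x \<omega> (Suc t))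
                         - (1/2) * (traj y x \<omega> (Suc t))\<^sup>2))"

definition EVS :: "nat \<Rightarrow> real \<Rightarrow> real" where
  "EVS N \<beta> = integral\<^sup>L (Pi\<^sub>M {..<N} (\<lambda>_. Pexp)) (\<lambda>ps. Vbar \<beta> (yS \<beta> N ps) 1)"

definition EVM :: "nat \<Rightarrow> real \<Rightarrow> real" where
  "EVM N \<beta> = integral\<^sup>L (Pi\<^sub>M {..<N} (\<lambda>_. Pexp)) (\<lambda>ps. Vbar \<beta> (yM \<beta> N ps) 1)"

end

theory Submission
  imports Defs
begin


lemma Pexp_distr: "distributed Pexp lborel (\<lambda>x. x) (exponential_density 1)"
  unfolding distributed_def Pexp_def
  by (auto simp: distr_id2)

lemma prob_Pexp: "prob_space Pexp"
  unfolding Pexp_def by (rule prob_space_exponential_density) simp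

lemma sets_Pexp[simp, measurable_cong]: "sets Pexp = sets borel"
  unfolding Pexp_def by simp
lemma space_Pexp[simp]: "space Pexp = UNIV"
  unfolding Pexp_def by simp

lemma Pexp_le: "0 \<le> a \<Longrightarrow> emeasure Pexp {x. x \<le> a} = ennreal (1 - exp (- a))"
proof -
  assume a: "0 \<le> a"
  interpret prob_space Pexp by (rule prob_Pexp)
  have "prob {x \<in> space Pexp. x \<le> a} = 1 - exp (- a * 1)"
    by (rule exponential_distributedD_le[OF Pexp_distr a]) simp
  then show ?thesis by (simp add: emeasure_eq_measure)
qed

lemma Pexp_gt: "0 \<le> a \<Longrightarrow> emeasure Pexp {x. a < x} = ennreal (exp (- a))"
proof -
  assume a: "0 \<le> a"
  interpret prob_space Pexp by (rule prob_Pexp)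
  have "prob {x \<in> space Pexp. a < x} = exp (- a * 1)"
    by (rule exponential_distributedD_gt[OF Pexp_distr a]) simp
  then show ?thesis by (simp add: emeasure_eq_measure)
qed

lemma AE_Pexp_nonneg: "AE x in Pexp. 0 \<le> x"
  unfolding Pexp_def
  by (subst AE_density) (auto simp: exponential_density_def intro!: AE_I2)

lemma nn_Pexp_id: "(\<integral>\<^sup>+x. ennreal x \<partial>Pexp) = 1"
proof -
  interpret prob_space Pexp by (rule prob_Pexp)
  have "has_bochner_integral Pexp (\<lambda>x. x ^ 1) (fact (0 + 1) / (fact 0 * 1 ^ 1))"
    by (rule has_bochner_integral_erlang_ith_moment[OF _ Pexp_distr]) simp
  then have "integrable Pexp (\<lambda>x. x)" "integral\<^sup>L Pexp (\<lambda>x. x) = 1"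
    by (auto simp: has_bochner_integral_iff)
  then show ?thesis
    using nn_integral_eq_integral[of Pexp "\<lambda>x. x"] AE_Pexp_nonneg by simp
qed

lemma nn_Pexp_abs: "(\<integral>\<^sup>+x. ennreal \<bar>x\<bar> \<partial>Pexp) = 1"
proof -
  have "(\<integral>\<^sup>+x. ennreal \<bar>x\<bar> \<partial>Pexp) = (\<integral>\<^sup>+x. ennreal x \<partial>Pexp)"
    by (rule nn_integral_cong_AE) (use AE_Pexp_nonneg in auto)
  then show ?thesis using nn_Pexp_id by simp
qed

lemma nn_Pexp_pos: "(\<integral>\<^sup>+x. ennreal (pos x) \<partial>Pexp) = 1"
proof -
  have "(\<integral>\<^sup>+x. ennreal (pos x) \<partial>Pexp) = (\<integral>\<^sup>+x. ennreal x \<partial>Pexp)"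
    by (rule nn_integral_cong_AE) (use AE_Pexp_nonneg in \<open>auto simp: pos_def\<close>)
  then show ?thesis using nn_Pexp_id by simp
qed

lemma pps: "product_prob_space (\<lambda>_. Pexp)"
  by (simp add: product_prob_space_def product_prob_space_axioms_def product_sigma_finite_def
      prob_Pexp prob_space_imp_sigma_finite)

lemma nn_comp:
  assumes "i \<in> I" and f[measurable]: "f \<in> borel_measurable borel"
  shows "(\<integral>\<^sup>+\<omega>. f (\<omega> i) \<partial>PiM I (\<lambda>_. Pexp)) = (\<integral>\<^sup>+x. f x \<partial>Pexp)"
proof -
  interpret product_prob_space "\<lambda>_. Pexp" I by (rule pps)
  have "(\<integral>\<^sup>+x. f x \<partial>Pexp) = (\<integral>\<^sup>+x. f x \<partial>distr (PiM I (\<lambda>_. Pexp)) Pexp (\<lambda>\<omega>. \<omega> i))"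
    using PiM_component[OF assms(1)] by simp
  also have "\<dots> = (\<integral>\<^sup>+\<omega>. f (\<omega> i) \<partial>PiM I (\<lambda>_. Pexp))"
    using assms(1) by (subst nn_integral_distr) auto
  finally show ?thesis by simp
qed

lemma nn_prod:
  assumes J: "finite J" "J \<subseteq> I" and f[measurable]: "\<And>s. s \<in> J \<Longrightarrow> f s \<in> borel_measurable borel"
  shows "(\<integral>\<^sup>+\<omega>. (\<Prod>s\<in>J. f s (\<omega> s)) \<partial>PiM I (\<lambda>_. Pexp)) = (\<Prod>s\<in>J. \<integral>\<^sup>+x. f s x \<partial>Pexp)"
proof -
  interpret product_prob_space "\<lambda>_. Pexp" I by (rule pps)
  have g[measurable]: "(\<lambda>x. \<Prod>s\<in>J. f s (x s)) \<in> borel_measurable (PiM J (\<lambda>_. Pexp))"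
    by measurable
  have "(\<integral>\<^sup>+\<omega>. (\<Prod>s\<in>J. f s (\<omega> s)) \<partial>PiM I (\<lambda>_. Pexp))
      = (\<integral>\<^sup>+\<omega>. (\<lambda>x. \<Prod>s\<in>J. f s (x s)) (restrict \<omega> J) \<partial>PiM I (\<lambda>_. Pexp))"
    by (rule nn_integral_cong) (simp add: restrict_def)
  also have "\<dots> = (\<integral>\<^sup>+x. (\<Prod>s\<in>J. f s (x s)) \<partial>distr (PiM I (\<lambda>_. Pexp)) (PiM J (\<lambda>_. Pexp)) (\<lambda>x. restrict x J))"
    using J by (subst nn_integral_distr) (auto intro!: measurable_restrict_subset)
  also have "\<dots> = (\<integral>\<^sup>+x. (\<Prod>s\<in>J. f s (x s)) \<partial>PiM J (\<lambda>_. Pexp))"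
    using distr_PiM_restrict_finite[OF J] by simp
  also have "\<dots> = (\<Prod>s\<in>J. \<integral>\<^sup>+x. f s x \<partial>Pexp)"
    using J by (subst product_nn_integral_prod) auto
  finally show ?thesis .
qed



lemma nn_Pexp_dens: "f \<in> borel_measurable borel \<Longrightarrow> (\<integral>\<^sup>+x. f x \<partial>Pexp) = (\<integral>\<^sup>+x. ennreal (exponential_density 1 x) * f x \<partial>lborel)"
  unfolding Pexp_def by (subst nn_integral_density) auto

lemma nn_Pexp_shift:
  assumes T: "0 \<le> T"
  shows "(\<integral>\<^sup>+x. ennreal (pos (x - T)) \<partial>Pexp) = ennreal (exp (- T))"
proof -
  let ?h = "\<lambda>z. ennreal (exponential_density 1 z) * ennreal (pos (z - T))"
  have "(\<integral>\<^sup>+x. ennreal (pos (x - T)) \<partial>Pexp) = (\<integral>\<^sup>+x. ?h x \<partial>lborel)"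
    by (rule nn_Pexp_dens) (auto simp: pos_def)
  also have "\<dots> = (\<integral>\<^sup>+x. ?h x \<partial>distr lborel borel ((+) T))"
    by (simp add: lborel_distr_plus)
  also have "\<dots> = (\<integral>\<^sup>+x. ?h (T + x) \<partial>lborel)"
    by (subst nn_integral_distr) (auto simp: pos_def)
  also have "\<dots> = (\<integral>\<^sup>+x. ennreal (exp (- T)) * (ennreal (exponential_density 1 x) * ennreal (pos x)) \<partial>lborel)"
  proof (rule nn_integral_cong)
    fix x :: real
    show "?h (T + x) = ennreal (exp (- T)) * (ennreal (exponential_density 1 x) * ennreal (pos x))"
    proof (cases "0 \<le> x")
      case True
      then have "exponential_density 1 (T + x) = exp (- T) * exponential_density 1 x"
        using T by (simp add: exponential_density_def exp_add[symmetric])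
      then show ?thesis using True T by (simp add: ennreal_mult' mult.assoc)
    next
      case False
      then show ?thesis by (simp add: pos_def)
    qed
  qed
  also have "\<dots> = ennreal (exp (- T)) * (\<integral>\<^sup>+x. ennreal (exponential_density 1 x) * ennreal (pos x) \<partial>lborel)"
    by (subst nn_integral_cmult) (auto simp: pos_def)
  also have "(\<integral>\<^sup>+x. ennreal (exponential_density 1 x) * ennreal (pos x) \<partial>lborel) = 1"
    using nn_Pexp_pos nn_Pexp_dens[of "\<lambda>x. ennreal (pos x)"] by (simp add: pos_def)
  finally show ?thesis by simp
qed

lemma nn_Pexp_exp:
  assumes r: "0 \<le> r" "r < 1"
  shows "(\<integral>\<^sup>+x. ennreal (exp (r * pos x)) \<partial>Pexp) = ennreal (1 / (1 - r))"
proof -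
  define l where "l = 1 - r"
  have l: "0 < l" using r by (simp add: l_def)
  have "(\<integral>\<^sup>+x. ennreal (exp (r * pos x)) \<partial>Pexp)
      = (\<integral>\<^sup>+x. ennreal (exponential_density 1 x) * ennreal (exp (r * pos x)) \<partial>lborel)"
    by (rule nn_Pexp_dens) (auto simp: pos_def)
  also have "\<dots> = (\<integral>\<^sup>+x. ennreal (1 / l) * ennreal (exponential_density l x) \<partial>lborel)"
  proof (rule nn_integral_cong)
    fix x :: real
    show "ennreal (exponential_density 1 x) * ennreal (exp (r * pos x)) = ennreal (1 / l) * ennreal (exponential_density l x)"
    proof (cases "0 \<le> x")
      case True
      have "exponential_density 1 x * exp (r * pos x) = 1 / l * exponential_density l x"
        using True l r by (simp add: exponential_density_def pos_def exp_add[symmetric] l_def field_simps)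
      then show ?thesis using True l
        by (simp add: ennreal_mult'[symmetric] exponential_density_nonneg)
    next
      case False
      then show ?thesis by (simp add: exponential_density_def)
    qed
  qed
  also have "\<dots> = ennreal (1 / l) * (\<integral>\<^sup>+x. ennreal (exponential_density l x) \<partial>lborel)"
    by (subst nn_integral_cmult) auto
  also have "(\<integral>\<^sup>+x. ennreal (exponential_density l x) \<partial>lborel) = 1"
  proof -
    interpret prob_space "density lborel (exponential_density l)"
      by (rule prob_space_exponential_density[OF l])
    have "emeasure (density lborel (exponential_density l)) UNIV = 1"
      using emeasure_space_1 by simp
    then show ?thesis by (subst (asm) emeasure_density) auto
  qed
  finally show ?thesis by (simp add: l_def)
qed

lemma Pexp_lt_le: "0 \<le> a \<Longrightarrow> emeasure Pexp {x. x < a} \<le> ennreal (1 - exp (- a))"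
proof -
  assume a: "0 \<le> a"
  have "emeasure Pexp {x. x < a} \<le> emeasure Pexp {x. x \<le> a}"
    by (rule emeasure_mono) auto
  then show ?thesis using Pexp_le[OF a] by simp
qed

lemma Pexp_Ioc: "0 \<le> a \<Longrightarrow> a \<le> b \<Longrightarrow> emeasure Pexp {x. a < x \<and> x \<le> b} = ennreal (exp (- a) - exp (- b))"
proof -
  assume a: "0 \<le> a" and ab: "a \<le> b"
  interpret prob_space Pexp by (rule prob_Pexp)
  have "{x. a < x \<and> x \<le> b} = {x. a < x} - {x. b < x}" by auto
  then have "emeasure Pexp {x. a < x \<and> x \<le> b} = emeasure Pexp {x. a < x} - emeasure Pexp {x. b < x}"
    using ab by (simp add: emeasure_Diff subset_eq)
  also have "\<dots> = ennreal (exp (- a)) - ennreal (exp (- b))"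
    using a ab by (simp add: Pexp_gt)
  also have "\<dots> = ennreal (exp (- a) - exp (- b))"
    using ab by (simp add: ennreal_minus)
  finally show ?thesis .
qed



abbreviation Om :: "(nat \<Rightarrow> real) measure" where
  "Om \<equiv> PiM UNIV (\<lambda>_::nat. Pexp)"

lemma prob_Om: "prob_space Om"
proof -
  interpret product_prob_space "\<lambda>_::nat. Pexp" UNIV by (rule pps)
  show ?thesis by (rule P.prob_space_axioms)
qed

lemma nn_le_int:
  fixes h :: "'a \<Rightarrow> real"
  assumes [measurable]: "h \<in> borel_measurable M" and "\<And>x. 0 \<le> h x"
    and "(\<integral>\<^sup>+x. ennreal (h x) \<partial>M) \<le> ennreal c" and "0 \<le> c"
  shows "integrable M h" "integral\<^sup>L M h \<le> c"
proof -
  have fin: "(\<integral>\<^sup>+x. ennreal (h x) \<partial>M) < \<infinity>"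
    using assms(3) le_less_trans by fastforce
  then show "integrable M h"
    using assms by (intro integrableI_bounded) auto
  then have "(\<integral>\<^sup>+x. ennreal (h x) \<partial>M) = ennreal (integral\<^sup>L M h)"
    using assms by (intro nn_integral_eq_integral) auto
  with assms(3,4) show "integral\<^sup>L M h \<le> c" by simp
qed

lemma nn_ge_int:
  fixes h :: "'a \<Rightarrow> real"
  assumes "integrable M h" and "\<And>x. 0 \<le> h x"
    and "ennreal c \<le> (\<integral>\<^sup>+x. ennreal (h x) \<partial>M)" and "0 \<le> c"
  shows "c \<le> integral\<^sup>L M h"
proof -
  have "(\<integral>\<^sup>+x. ennreal (h x) \<partial>M) = ennreal (integral\<^sup>L M h)"
    using assms by (intro nn_integral_eq_integral) auto
  with assms(3,4) show ?thesis by (simp add: ennreal_le_iff integral_nonneg_AE assms(2))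
qed

definition pol :: "(real \<Rightarrow> real \<Rightarrow> real) \<Rightarrow> bool" where
  "pol y \<longleftrightarrow> (\<forall>x p. 0 \<le> x \<longrightarrow> 0 \<le> y x p \<and> y x p \<le> x)"

lemma traj_bnd:
  assumes "pol y" "0 \<le> x"
  shows "0 \<le> traj y x \<omega> t \<and> traj y x \<omega> t \<le> x"
  using assms by (induction t) (auto simp: pol_def intro: order_trans)

lemma traj_dec:
  assumes "pol y" "0 \<le> x"
  shows "traj y x \<omega> (Suc t) \<le> traj y x \<omega> t"
  using traj_bnd[OF assms, of \<omega> t] assms(1) by (simp add: pol_def)

lemma traj_sell:
  assumes "pol y" "0 \<le> x" and sell: "\<And>x p. 0 \<le> x \<Longrightarrow> T \<le> p \<Longrightarrow> y x p = 0"
  shows "traj y x \<omega> t \<le> x * (\<Prod>s<t. indicator {..<T} (\<omega> s))"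
proof (induction t)
  case 0 then show ?case by simp
next
  case (Suc t)
  show ?case
  proof (cases "T \<le> \<omega> t")
    case True
    then have "traj y x \<omega> (Suc t) = 0" using sell traj_bnd[OF assms(1,2)] by simp
    then show ?thesis using assms(2) by (simp add: prod_nonneg)
  next
    case False
    then have "indicator {..<T} (\<omega> t) = (1::real)" by simp
    then show ?thesis using Suc traj_dec[OF assms(1,2), of \<omega> t] by (simp add: mult.commute)
  qed
qed

lemma traj_low:
  assumes "pol y" "0 \<le> c" "c \<le> x" and low: "\<And>x' p. c \<le> x' \<Longrightarrow> p \<le> a \<Longrightarrow> c \<le> y x' p"
  shows "c * (\<Prod>s<t. indicator {..a} (\<omega> s)) \<le> traj y x \<omega> t"
proof (induction t)
  case 0 then show ?case using assms by simp
next
  case (Suc t)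
  have x0: "0 \<le> x" using assms by simp
  show ?case
  proof (cases "\<omega> t \<le> a \<and> (\<forall>s<t. \<omega> s \<le> a)")
    case True
    then have "(\<Prod>s<t. indicator {..a} (\<omega> s)) = (1::real)" by (simp add: indicator_def)
    then have "c \<le> traj y x \<omega> t" using Suc by simp
    then have "c \<le> traj y x \<omega> (Suc t)" using low True by simp
    moreover have "(\<Prod>s<Suc t. indicator {..a} (\<omega> s)) = (1::real)" using True
      by (simp add: indicator_def less_Suc_eq)
    ultimately show ?thesis by simp
  next
    case False
    then have "(\<Prod>s<Suc t. indicator {..a} (\<omega> s)) = (0::real)"
      by (auto simp: indicator_def less_Suc_eq intro!: prod_zero)
    then have "c * (\<Prod>s<Suc t. indicator {..a} (\<omega> s)) = 0" by simp
    then show ?thesis using traj_bnd[OF assms(1) x0, of \<omega> "Suc t"] by linarith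
  qed
qed

lemma traj_meas[measurable]:
  assumes [measurable]: "case_prod y \<in> borel_measurable (borel \<Otimes>\<^sub>M borel)"
  shows "(\<lambda>\<omega>. traj y x \<omega> t) \<in> borel_measurable Om"
  by (induction t) auto



lemma nn_coord_abs: "(\<integral>\<^sup>+\<omega>. ennreal \<bar>\<omega> (t::nat)\<bar> \<partial>Om) = 1"
  using nn_comp[of t UNIV "\<lambda>x. ennreal \<bar>x\<bar>"] nn_Pexp_abs by simp

lemma int_coord: "integrable Om (\<lambda>\<omega>. \<omega> (t::nat))"
  by (rule integrableI_bounded) (auto simp: nn_coord_abs)

lemma int_coord_abs: "(\<integral>\<omega>. \<bar>\<omega> (t::nat)\<bar> \<partial>Om) = 1"
proof -
  have "(\<integral>\<^sup>+\<omega>. ennreal \<bar>\<omega> t\<bar> \<partial>Om) = ennreal (\<integral>\<omega>. \<bar>\<omega> t\<bar> \<partial>Om)"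
    using int_coord[of t] by (intro nn_integral_eq_integral) auto
  then show ?thesis using nn_coord_abs[of t] by simp
qed

lemma AE_coord_nonneg: "AE \<omega> in Om. 0 \<le> \<omega> (t::nat)"
proof -
  interpret product_prob_space "\<lambda>_::nat. Pexp" UNIV by (rule pps)
  show ?thesis by (rule AE_component) (auto simp: AE_Pexp_nonneg)
qed

lemma AE_summable_coord:
  assumes "0 \<le> \<beta>" "\<beta> < 1"
  shows "AE \<omega> in Om. summable (\<lambda>t. \<beta> ^ t * \<bar>\<omega> t\<bar>)"
proof -
  have "(\<integral>\<^sup>+\<omega>. (\<Sum>t. ennreal (\<beta> ^ t * \<bar>\<omega> t\<bar>)) \<partial>Om) = (\<Sum>t. \<integral>\<^sup>+\<omega>. ennreal (\<beta> ^ t * \<bar>\<omega> t\<bar>) \<partial>Om)"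
    by (rule nn_integral_suminf) auto
  also have "\<dots> = (\<Sum>t. ennreal (\<beta> ^ t))"
  proof -
    have "(\<integral>\<^sup>+\<omega>. ennreal (\<beta> ^ t * \<bar>\<omega> t\<bar>) \<partial>Om) = ennreal (\<beta> ^ t)" for t
      using assms nn_coord_abs[of t]
      by (simp add: ennreal_mult nn_integral_cmult)
    then show ?thesis by simp
  qed
  also have "\<dots> = ennreal (\<Sum>t. \<beta> ^ t)"
    using assms by (intro suminf_ennreal2) auto
  finally have "(\<integral>\<^sup>+\<omega>. (\<Sum>t. ennreal (\<beta> ^ t * \<bar>\<omega> t\<bar>)) \<partial>Om) \<noteq> \<infinity>" by simp
  then have "AE \<omega> in Om. (\<Sum>t. ennreal (\<beta> ^ t * \<bar>\<omega> t\<bar>)) \<noteq> \<infinity>"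
    by (intro nn_integral_PInf_AE) auto
  then show ?thesis
    by eventually_elim (rule summable_suminf_not_top, use assms in auto)
qed

context
  fixes y :: "real \<Rightarrow> real \<Rightarrow> real" and \<beta> x :: real
  assumes pol: "pol y" and ym[measurable]: "case_prod y \<in> borel_measurable (borel \<Otimes>\<^sub>M borel)"
    and b0: "0 \<le> \<beta>" and b1: "\<beta> < 1" and x0: "0 \<le> x" and x1: "x \<le> 1"
begin

lemma int_rev: "integrable Om (\<lambda>\<omega>. \<omega> t * (traj y x \<omega> t - traj y x \<omega> (Suc t)))"
proof (rule Bochner_Integration.integrable_bound[OF int_coord[of t]])
  show "AE \<omega> in Om. norm (\<omega> t * (traj y x \<omega> t - traj y x \<omega> (Suc t))) \<le> norm (\<omega> t)"
  proof (rule AE_I2)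
    fix \<omega>
    have "\<bar>traj y x \<omega> t - traj y x \<omega> (Suc t)\<bar> \<le> 1"
      using traj_bnd[OF pol x0, of \<omega> t] traj_bnd[OF pol x0, of \<omega> "Suc t"] x1 by linarith
    then show "norm (\<omega> t * (traj y x \<omega> t - traj y x \<omega> (Suc t))) \<le> norm (\<omega> t)"
      by (simp add: abs_mult mult_left_le)
  qed
qed auto

lemma int_hold: "integrable Om (\<lambda>\<omega>. (traj y x \<omega> (Suc t))\<^sup>2)"
proof -
  interpret prob_space Om by (rule prob_Om)
  show ?thesis
  proof (rule integrable_const_bound[where B=1])
    show "AE \<omega> in Om. norm ((traj y x \<omega> (Suc t))\<^sup>2) \<le> 1"
    proof (rule AE_I2)
      fix \<omega>
      have "0 \<le> traj y x \<omega> (Suc t)" "traj y x \<omega> (Suc t) \<le> 1"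
        using traj_bnd[OF pol x0, of \<omega> "Suc t"] x1 by auto
      then have "0 \<le> (traj y x \<omega> (Suc t))\<^sup>2" "(traj y x \<omega> (Suc t))\<^sup>2 \<le> 1"
        by (auto simp: power_le_one)
      then show "norm ((traj y x \<omega> (Suc t))\<^sup>2) \<le> 1"
        by simp
    qed
  qed auto
qed

lemma Vbar_sums:
  "(\<lambda>t. \<beta> ^ t * ((\<integral>\<omega>. \<omega> t * (traj y x \<omega> t - traj y x \<omega> (Suc t)) \<partial>Om)
        - 1/2 * (\<integral>\<omega>. (traj y x \<omega> (Suc t))\<^sup>2 \<partial>Om))) sums Vbar \<beta> y x"
proof -
  define f where "f t \<omega> = \<beta> ^ t * (\<omega> t * (traj y x \<omega> t - traj y x \<omega> (Suc t))
                         - (1/2) * (traj y x \<omega> (Suc t))\<^sup>2)" for t \<omega>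
  have fint: "integrable Om (f t)" for t
    unfolding f_def using int_rev[of t] int_hold[of t] by auto
  have fnorm: "norm (f t \<omega>) \<le> \<beta> ^ t * \<bar>\<omega> t\<bar> + \<beta> ^ t / 2" for t \<omega>
  proof -
    have d: "\<bar>traj y x \<omega> t - traj y x \<omega> (Suc t)\<bar> \<le> 1"
      using traj_bnd[OF pol x0, of \<omega> t] traj_bnd[OF pol x0, of \<omega> "Suc t"] x1 by linarith
    have h: "0 \<le> (traj y x \<omega> (Suc t))\<^sup>2" "(traj y x \<omega> (Suc t))\<^sup>2 \<le> 1"
      using traj_bnd[OF pol x0, of \<omega> "Suc t"] x1 by (auto simp: power_le_one)
    have "\<bar>\<omega> t * (traj y x \<omega> t - traj y x \<omega> (Suc t))\<bar> \<le> \<bar>\<omega> t\<bar>"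
      using d by (simp add: abs_mult mult_left_le)
    then have "\<bar>\<omega> t * (traj y x \<omega> t - traj y x \<omega> (Suc t)) - (1/2) * (traj y x \<omega> (Suc t))\<^sup>2\<bar> \<le> \<bar>\<omega> t\<bar> + 1/2"
      using h by linarith
    then have "\<beta> ^ t * \<bar>\<omega> t * (traj y x \<omega> t - traj y x \<omega> (Suc t)) - (1/2) * (traj y x \<omega> (Suc t))\<^sup>2\<bar> \<le> \<beta> ^ t * (\<bar>\<omega> t\<bar> + 1/2)"
      using b0 by (intro mult_left_mono) auto
    moreover have "norm (f t \<omega>) = \<beta> ^ t * \<bar>\<omega> t * (traj y x \<omega> t - traj y x \<omega> (Suc t)) - (1/2) * (traj y x \<omega> (Suc t))\<^sup>2\<bar>"
      unfolding f_def real_norm_def abs_mult power_abs abs_of_nonneg[OF b0] ..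
    ultimately show ?thesis by (simp add: algebra_simps)
  qed
  have gs: "summable (\<lambda>t. \<beta> ^ t / 2)"
    using b0 b1 by (intro summable_divide summable_geometric) auto
  have ae: "AE \<omega> in Om. summable (\<lambda>t. norm (f t \<omega>))"
    using AE_summable_coord[OF b0 b1]
  proof eventually_elim
    case (elim \<omega>)
    show ?case
      by (rule summable_comparison_test[OF _ summable_add[OF elim gs]]) (use fnorm in auto)
  qed
  have intn: "(\<integral>\<omega>. norm (f t \<omega>) \<partial>Om) \<le> \<beta> ^ t * 1 + \<beta> ^ t / 2" for t
  proof -
    interpret prob_space Om by (rule prob_Om)
    have "(\<integral>\<omega>. norm (f t \<omega>) \<partial>Om) \<le> (\<integral>\<omega>. \<beta> ^ t * \<bar>\<omega> t\<bar> + \<beta> ^ t / 2 \<partial>Om)"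
      using fint[of t] int_coord[of t] fnorm by (intro integral_mono) auto
    also have "\<dots> = \<beta> ^ t * 1 + \<beta> ^ t / 2"
      using int_coord[of t] int_coord_abs[of t] by (simp add: prob_space)
    finally show ?thesis .
  qed
  have sn: "summable (\<lambda>t. \<integral>\<omega>. norm (f t \<omega>) \<partial>Om)"
  proof (rule summable_comparison_test[OF _ summable_add[OF summable_geometric[of \<beta>] gs]])
    show "\<exists>N. \<forall>n\<ge>N. norm (\<integral>\<omega>. norm (f n \<omega>) \<partial>Om) \<le> \<beta> ^ n + \<beta> ^ n / 2"
      using intn by (intro exI[of _ 0]) (auto simp: integral_nonneg_AE)
  qed (use b0 b1 in auto)
  have "(\<lambda>t. integral\<^sup>L Om (f t)) sums (\<integral>\<omega>. (\<Sum>t. f t \<omega>) \<partial>Om)"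
    by (rule sums_integral[OF fint ae sn])
  moreover have "(\<integral>\<omega>. (\<Sum>t. f t \<omega>) \<partial>Om) = Vbar \<beta> y x"
    unfolding Vbar_def f_def by simp
  moreover have "integral\<^sup>L Om (f t) = \<beta> ^ t * ((\<integral>\<omega>. \<omega> t * (traj y x \<omega> t - traj y x \<omega> (Suc t)) \<partial>Om)
        - 1/2 * (\<integral>\<omega>. (traj y x \<omega> (Suc t))\<^sup>2 \<partial>Om))" for t
    unfolding f_def using int_rev[of t] int_hold[of t] by simp
  ultimately show ?thesis by simp
qed

end



lemma meas_Pexp_lt: "0 \<le> T \<Longrightarrow> measure Pexp {..<T} \<le> 1 - exp (- T)"
proof -
  assume T: "0 \<le> T"
  interpret prob_space Pexp by (rule prob_Pexp)
  have "emeasure Pexp {..<T} \<le> ennreal (1 - exp (- T))"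
    using Pexp_lt_le[OF T] by (simp add: lessThan_def)
  then show ?thesis using T by (auto simp: emeasure_eq_measure ennreal_le_iff2)
qed

lemma meas_Pexp_le: "0 \<le> a \<Longrightarrow> measure Pexp {..a} = 1 - exp (- a)"
proof -
  assume a: "0 \<le> a"
  interpret prob_space Pexp by (rule prob_Pexp)
  have "emeasure Pexp {..a} = ennreal (1 - exp (- a))"
    using Pexp_le[OF a] by (simp add: atMost_def)
  then have "ennreal (measure Pexp {..a}) = ennreal (1 - exp (- a))" by (simp add: emeasure_eq_measure)
  moreover have "0 \<le> 1 - exp (- a)" using a by simp
  ultimately show ?thesis by (subst (asm) ennreal_inj) auto
qed

lemma int_prod_ind:
  assumes A: "A \<in> sets borel"
  shows "(\<integral>\<omega>. (\<Prod>s<n. indicator A (\<omega> s)) \<partial>Om) = (measure Pexp A) ^ n"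
proof -
  interpret prob_space Pexp by (rule prob_Pexp)
  have "(\<integral>\<^sup>+\<omega>. ennreal (\<Prod>s<n. indicator A (\<omega> s)) \<partial>Om) = (\<integral>\<^sup>+\<omega>. (\<Prod>s\<in>{..<n}. (\<lambda>s z. ennreal (indicator A z)) s (\<omega> s)) \<partial>Om)"
    by (intro nn_integral_cong) (simp add: prod_ennreal)
  also have "\<dots> = (\<Prod>s\<in>{..<n}. \<integral>\<^sup>+z. ennreal (indicator A z) \<partial>Pexp)"
    using A by (intro nn_prod) auto
  also have "\<dots> = ennreal ((measure Pexp A) ^ n)"
    using A by (simp add: ennreal_indicator emeasure_eq_measure prod_ennreal ennreal_power)
  finally show ?thesis
    using A by (subst (asm) nn_integral_eq_integrable) (auto intro!: prod_nonneg)
qed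

lemma int_pos_prod_ind:
  assumes T: "0 \<le> T"
  shows "(\<integral>\<omega>. pos (\<omega> t - T) * (\<Prod>s<t. indicator {..<T} (\<omega> s)) \<partial>Om) \<le> exp (- T) * (1 - exp (- T)) ^ t"
    "integrable Om (\<lambda>\<omega>. pos (\<omega> t - T) * (\<Prod>s<t. indicator {..<T} (\<omega> s)))"
proof -
  interpret prob_space Pexp by (rule prob_Pexp)
  define F where "F s z = (if s = t then ennreal (pos (z - T)) else ennreal (indicator {..<T} z))" for s z
  have "(\<integral>\<^sup>+\<omega>. ennreal (pos (\<omega> t - T) * (\<Prod>s<t. indicator {..<T} (\<omega> s))) \<partial>Om)
      = (\<integral>\<^sup>+\<omega>. (\<Prod>s\<in>{..<Suc t}. F s (\<omega> s)) \<partial>Om)"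
  proof (intro nn_integral_cong)
    fix \<omega> :: "nat \<Rightarrow> real"
    have "(\<Prod>s\<in>{..<Suc t}. F s (\<omega> s)) = (\<Prod>s\<in>{..<t}. F s (\<omega> s)) * F t (\<omega> t)"
      by simp
    also have "(\<Prod>s\<in>{..<t}. F s (\<omega> s)) = (\<Prod>s\<in>{..<t}. ennreal (indicator {..<T} (\<omega> s)))"
      by (intro prod.cong) (auto simp: F_def)
    finally show "ennreal (pos (\<omega> t - T) * (\<Prod>s<t. indicator {..<T} (\<omega> s))) = (\<Prod>s\<in>{..<Suc t}. F s (\<omega> s))"
      by (simp add: F_def prod_ennreal ennreal_mult' pos_def mult.commute)
  qed
  also have "\<dots> = (\<Prod>s\<in>{..<Suc t}. \<integral>\<^sup>+z. F s z \<partial>Pexp)"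
  proof (intro nn_prod)
    fix s show "F s \<in> borel_measurable borel"
    proof (cases "s = t")
      case True
      then have "F s = (\<lambda>z. ennreal (pos (z - T)))" by (simp add: fun_eq_iff F_def)
      then show ?thesis by (simp add: pos_def)
    next
      case False
      then have "F s = (\<lambda>z. ennreal (indicator {..<T} z))" by (simp add: fun_eq_iff F_def)
      then show ?thesis by simp
    qed
  qed auto
  also have "\<dots> = (\<Prod>s\<in>{..<t}. \<integral>\<^sup>+z. F s z \<partial>Pexp) * (\<integral>\<^sup>+z. F t z \<partial>Pexp)"
    by simp
  also have "(\<Prod>s\<in>{..<t}. \<integral>\<^sup>+z. F s z \<partial>Pexp) = (\<Prod>s\<in>{..<t}. ennreal (measure Pexp {..<T}))"
    by (intro prod.cong) (auto simp: F_def ennreal_indicator emeasure_eq_measure)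
  also have "\<dots> = ennreal (measure Pexp {..<T} ^ t)"
    by (simp add: prod_ennreal ennreal_power)
  also have "(\<integral>\<^sup>+z. F t z \<partial>Pexp) = ennreal (exp (- T))"
    using nn_Pexp_shift[OF T] by (simp add: F_def)
  also have "ennreal (measure Pexp {..<T} ^ t) * ennreal (exp (- T)) = ennreal (exp (- T) * measure Pexp {..<T} ^ t)"
    by (simp add: ennreal_mult' mult.commute)
  finally have eq: "(\<integral>\<^sup>+\<omega>. ennreal (pos (\<omega> t - T) * (\<Prod>s<t. indicator {..<T} (\<omega> s))) \<partial>Om) = ennreal (exp (- T) * measure Pexp {..<T} ^ t)" .
  have le: "exp (- T) * measure Pexp {..<T} ^ t \<le> exp (- T) * (1 - exp (- T)) ^ t"
    using meas_Pexp_lt[OF T] by (intro mult_left_mono power_mono) auto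
  have nn: "0 \<le> pos (\<omega> t - T) * (\<Prod>s<t. indicator {..<T} (\<omega> s))" for \<omega> :: "nat \<Rightarrow> real"
    by (auto simp: pos_def prod_nonneg)
  have le2: "(\<integral>\<^sup>+\<omega>. ennreal (pos (\<omega> t - T) * (\<Prod>s<t. indicator {..<T} (\<omega> s))) \<partial>Om) \<le> ennreal (exp (- T) * (1 - exp (- T)) ^ t)"
    unfolding eq using le by (intro ennreal_leI)
  show "(\<integral>\<omega>. pos (\<omega> t - T) * (\<Prod>s<t. indicator {..<T} (\<omega> s)) \<partial>Om) \<le> exp (- T) * (1 - exp (- T)) ^ t"
    "integrable Om (\<lambda>\<omega>. pos (\<omega> t - T) * (\<Prod>s<t. indicator {..<T} (\<omega> s)))"
  proof -
    have "exp (- T) \<le> 1" using T by simp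
    then have c0: "0 \<le> exp (- T) * (1 - exp (- T)) ^ t" by simp
    show "(\<integral>\<omega>. pos (\<omega> t - T) * (\<Prod>s<t. indicator {..<T} (\<omega> s)) \<partial>Om) \<le> exp (- T) * (1 - exp (- T)) ^ t"
      "integrable Om (\<lambda>\<omega>. pos (\<omega> t - T) * (\<Prod>s<t. indicator {..<T} (\<omega> s)))"
      using nn_le_int[OF _ nn le2 c0] by (auto simp: pos_def)
  qed
qed



lemma prod_ind_01: "(\<Prod>s<(n::nat). indicator A (\<omega> s) :: real) = 0 \<or> (\<Prod>s<n. indicator A (\<omega> s) :: real) = 1"
  by (induction n) (auto simp: indicator_def)

lemma int_prod_ind_int: "integrable Om (\<lambda>\<omega>. c * (\<Prod>s<(n::nat). indicator A (\<omega> s) :: real))" if "A \<in> sets borel"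
proof -
  interpret prob_space Om by (rule prob_Om)
  show ?thesis
  proof (rule integrable_const_bound[where B="\<bar>c\<bar>"])
    show "AE \<omega> in Om. norm (c * (\<Prod>s<n. indicator A (\<omega> s) :: real)) \<le> \<bar>c\<bar>"
    proof (rule AE_I2)
      fix \<omega> :: "nat \<Rightarrow> real"
      have "(\<Prod>s<n. indicator A (\<omega> s) :: real) = 0 \<or> (\<Prod>s<n. indicator A (\<omega> s) :: real) = 1"
        by (rule prod_ind_01)
      then show "norm (c * (\<Prod>s<n. indicator A (\<omega> s) :: real)) \<le> \<bar>c\<bar>"
      proof
        assume P0: "(\<Prod>s<n. indicator A (\<omega> s) :: real) = 0" show ?thesis unfolding P0 by simp
      next
        assume P1: "(\<Prod>s<n. indicator A (\<omega> s) :: real) = 1" show ?thesis unfolding P1 by simp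
      qed
    qed
  qed (use that in auto)
qed

declare traj.simps(2)[simp del]

context
  fixes y :: "real \<Rightarrow> real \<Rightarrow> real" and \<beta> x :: real
  assumes pol: "pol y" and ym[measurable]: "case_prod y \<in> borel_measurable (borel \<Otimes>\<^sub>M borel)"
    and b0: "0 \<le> \<beta>" and b1: "\<beta> < 1" and x0: "0 \<le> x" and x1: "x \<le> 1"
begin

lemma int_traj: "integrable Om (\<lambda>\<omega>. traj y x \<omega> t)"
proof -
  interpret prob_space Om by (rule prob_Om)
  show ?thesis
  proof (rule integrable_const_bound[where B=1])
    show "AE \<omega> in Om. norm (traj y x \<omega> t) \<le> 1"
      using traj_bnd[OF pol x0] x1 by (intro AE_I2) (auto intro: order_trans)
  qed (use ym in auto)
qed

lemma d_nonneg: "0 \<le> (\<integral>\<omega>. traj y x \<omega> t - traj y x \<omega> (Suc t) \<partial>Om)"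
  using traj_dec[OF pol x0] by (intro integral_nonneg_AE AE_I2) auto

lemma d_sum: "summable (\<lambda>t. \<integral>\<omega>. traj y x \<omega> t - traj y x \<omega> (Suc t) \<partial>Om)"
  "(\<Sum>t. \<integral>\<omega>. traj y x \<omega> t - traj y x \<omega> (Suc t) \<partial>Om) \<le> 1"
proof -
  interpret prob_space Om by (rule prob_Om)
  have ps: "(\<Sum>t<n. \<integral>\<omega>. traj y x \<omega> t - traj y x \<omega> (Suc t) \<partial>Om) \<le> 1" for n
  proof -
    have "(\<Sum>t<n. \<integral>\<omega>. traj y x \<omega> t - traj y x \<omega> (Suc t) \<partial>Om)
        = (\<Sum>t<n. (\<integral>\<omega>. traj y x \<omega> t \<partial>Om) - (\<integral>\<omega>. traj y x \<omega> (Suc t) \<partial>Om))"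
      using int_traj by (intro sum.cong) auto
    also have "\<dots> = (\<integral>\<omega>. traj y x \<omega> 0 \<partial>Om) - (\<integral>\<omega>. traj y x \<omega> n \<partial>Om)"
      by (rule sum_lessThan_telescope')
    also have "\<dots> \<le> 1"
    proof -
      have "0 \<le> (\<integral>\<omega>. traj y x \<omega> n \<partial>Om)"
        using traj_bnd[OF pol x0] by (intro integral_nonneg_AE AE_I2) auto
      then show ?thesis using x1 by (simp add: prob_space)
    qed
    finally show ?thesis .
  qed
  show s: "summable (\<lambda>t. \<integral>\<omega>. traj y x \<omega> t - traj y x \<omega> (Suc t) \<partial>Om)"
    by (rule summableI_nonneg_bounded[OF d_nonneg ps])
  show "(\<Sum>t. \<integral>\<omega>. traj y x \<omega> t - traj y x \<omega> (Suc t) \<partial>Om) \<le> 1"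
    by (rule suminf_le_const[OF s ps])
qed

lemma u_nonneg: "0 \<le> (\<integral>\<omega>. \<omega> t * (traj y x \<omega> t - traj y x \<omega> (Suc t)) \<partial>Om)"
  using AE_coord_nonneg[of t]
proof (intro integral_nonneg_AE, eventually_elim)
  case (elim \<omega>)
  then show ?case using traj_dec[OF pol x0, of \<omega> t] by simp
qed

lemma u_le1: "(\<integral>\<omega>. \<omega> t * (traj y x \<omega> t - traj y x \<omega> (Suc t)) \<partial>Om) \<le> 1"
proof -
  have "(\<integral>\<omega>. \<omega> t * (traj y x \<omega> t - traj y x \<omega> (Suc t)) \<partial>Om) \<le> (\<integral>\<omega>. \<bar>\<omega> t\<bar> \<partial>Om)"
  proof (rule integral_mono[OF int_rev[OF pol ym b0 b1 x0 x1]])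
    show "integrable Om (\<lambda>\<omega>. \<bar>\<omega> t\<bar>)" using int_coord[of t] by auto
    fix \<omega> :: "nat \<Rightarrow> real"
    have "\<bar>traj y x \<omega> t - traj y x \<omega> (Suc t)\<bar> \<le> 1"
      using traj_bnd[OF pol x0, of \<omega> t] traj_bnd[OF pol x0, of \<omega> "Suc t"] x1 by linarith
    then have "\<bar>\<omega> t * (traj y x \<omega> t - traj y x \<omega> (Suc t))\<bar> \<le> \<bar>\<omega> t\<bar>"
      by (simp add: abs_mult mult_left_le)
    then show "\<omega> t * (traj y x \<omega> t - traj y x \<omega> (Suc t)) \<le> \<bar>\<omega> t\<bar>" by linarith
  qed
  then show ?thesis using int_coord_abs[of t] by simp
qed

lemma h_nonneg: "0 \<le> (\<integral>\<omega>. (traj y x \<omega> (Suc t))\<^sup>2 \<partial>Om)"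
  by (intro integral_nonneg_AE AE_I2) auto

lemma h_le1: "(\<integral>\<omega>. (traj y x \<omega> (Suc t))\<^sup>2 \<partial>Om) \<le> 1"
proof -
  interpret prob_space Om by (rule prob_Om)
  have "(\<integral>\<omega>. (traj y x \<omega> (Suc t))\<^sup>2 \<partial>Om) \<le> (\<integral>\<omega>. 1 \<partial>Om)"
  proof (rule integral_mono[OF int_hold[OF pol ym b0 b1 x0 x1]])
    fix \<omega> :: "nat \<Rightarrow> real"
    have "0 \<le> traj y x \<omega> (Suc t)" "traj y x \<omega> (Suc t) \<le> 1"
      using traj_bnd[OF pol x0, of \<omega> "Suc t"] x1 by auto
    then show "(traj y x \<omega> (Suc t))\<^sup>2 \<le> 1" by (simp add: power_le_one)
  qed auto
  then show ?thesis by (simp add: prob_space)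
qed

lemma sum_bu: "summable (\<lambda>t. \<beta> ^ t * (\<integral>\<omega>. \<omega> t * (traj y x \<omega> t - traj y x \<omega> (Suc t)) \<partial>Om))"
  by (rule summable_comparison_test[OF _ summable_geometric[of \<beta>]])
     (use u_nonneg u_le1 b0 b1 in \<open>auto intro!: exI[of _ 0] mult_left_le simp: abs_mult\<close>)

lemma sum_bh: "summable (\<lambda>t. \<beta> ^ t * (\<integral>\<omega>. (traj y x \<omega> (Suc t))\<^sup>2 \<partial>Om))"
  by (rule summable_comparison_test[OF _ summable_geometric[of \<beta>]])
     (use h_nonneg h_le1 b0 b1 in \<open>auto intro!: exI[of _ 0] mult_left_le simp: abs_mult\<close>)

lemma Vbar_eq: "Vbar \<beta> y x = (\<Sum>t. \<beta> ^ t * (\<integral>\<omega>. \<omega> t * (traj y x \<omega> t - traj y x \<omega> (Suc t)) \<partial>Om))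
    - 1/2 * (\<Sum>t. \<beta> ^ t * (\<integral>\<omega>. (traj y x \<omega> (Suc t))\<^sup>2 \<partial>Om))"
proof -
  have "(\<lambda>t. \<beta> ^ t * (\<integral>\<omega>. \<omega> t * (traj y x \<omega> t - traj y x \<omega> (Suc t)) \<partial>Om)
      - 1/2 * (\<beta> ^ t * (\<integral>\<omega>. (traj y x \<omega> (Suc t))\<^sup>2 \<partial>Om))) sums
      ((\<Sum>t. \<beta> ^ t * (\<integral>\<omega>. \<omega> t * (traj y x \<omega> t - traj y x \<omega> (Suc t)) \<partial>Om))
    - 1/2 * (\<Sum>t. \<beta> ^ t * (\<integral>\<omega>. (traj y x \<omega> (Suc t))\<^sup>2 \<partial>Om)))"
    by (intro sums_diff sums_mult summable_sums sum_bu sum_bh)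
  moreover have "(\<lambda>t. \<beta> ^ t * (\<integral>\<omega>. \<omega> t * (traj y x \<omega> t - traj y x \<omega> (Suc t)) \<partial>Om)
      - 1/2 * (\<beta> ^ t * (\<integral>\<omega>. (traj y x \<omega> (Suc t))\<^sup>2 \<partial>Om))) sums Vbar \<beta> y x"
    using Vbar_sums[OF pol ym b0 b1 x0 x1] by (simp add: algebra_simps)
  ultimately show ?thesis using sums_unique2 by blast
qed

lemma V_lower: "- 1/2 * (\<Sum>t. \<beta> ^ t * (\<integral>\<omega>. (traj y x \<omega> (Suc t))\<^sup>2 \<partial>Om)) \<le> Vbar \<beta> y x"
proof -
  have "0 \<le> (\<Sum>t. \<beta> ^ t * (\<integral>\<omega>. \<omega> t * (traj y x \<omega> t - traj y x \<omega> (Suc t)) \<partial>Om))"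
    using u_nonneg b0 by (intro suminf_nonneg sum_bu) auto
  then show ?thesis using Vbar_eq by simp
qed

context
  fixes T :: real
  assumes T0: "0 \<le> T" and sell: "\<And>x p. 0 \<le> x \<Longrightarrow> T \<le> p \<Longrightarrow> y x p = 0"
begin

lemma u_upper: "(\<integral>\<omega>. \<omega> t * (traj y x \<omega> t - traj y x \<omega> (Suc t)) \<partial>Om)
   \<le> T * (\<integral>\<omega>. traj y x \<omega> t - traj y x \<omega> (Suc t) \<partial>Om) + exp (- T) * (1 - exp (- T)) ^ t"
proof -
  have "(\<integral>\<omega>. \<omega> t * (traj y x \<omega> t - traj y x \<omega> (Suc t)) \<partial>Om)
      \<le> (\<integral>\<omega>. T * (traj y x \<omega> t - traj y x \<omega> (Suc t)) + pos (\<omega> t - T) * (\<Prod>s<t. indicator {..<T} (\<omega> s)) \<partial>Om)"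
  proof (rule integral_mono[OF int_rev[OF pol ym b0 b1 x0 x1]])
    show "integrable Om (\<lambda>\<omega>. T * (traj y x \<omega> t - traj y x \<omega> (Suc t)) + pos (\<omega> t - T) * (\<Prod>s<t. indicator {..<T} (\<omega> s)))"
      using int_traj int_pos_prod_ind(2)[OF T0, of t] by auto
    fix \<omega> :: "nat \<Rightarrow> real"
    have D0: "0 \<le> traj y x \<omega> t - traj y x \<omega> (Suc t)" using traj_dec[OF pol x0] by simp
    have "traj y x \<omega> t - traj y x \<omega> (Suc t) \<le> traj y x \<omega> t"
      using traj_bnd[OF pol x0, of \<omega> "Suc t"] by simp
    also have "\<dots> \<le> x * (\<Prod>s<t. indicator {..<T} (\<omega> s))" by (rule traj_sell[OF pol x0 sell])
    also have "\<dots> \<le> (\<Prod>s<t. indicator {..<T} (\<omega> s))"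
      using x0 x1 by (intro mult_left_le_one_le prod_nonneg) auto
    finally have D1: "traj y x \<omega> t - traj y x \<omega> (Suc t) \<le> (\<Prod>s<t. indicator {..<T} (\<omega> s))" .
    show "\<omega> t * (traj y x \<omega> t - traj y x \<omega> (Suc t))
        \<le> T * (traj y x \<omega> t - traj y x \<omega> (Suc t)) + pos (\<omega> t - T) * (\<Prod>s<t. indicator {..<T} (\<omega> s))"
    proof (cases "\<omega> t \<le> T")
      case True
      then have "\<omega> t * (traj y x \<omega> t - traj y x \<omega> (Suc t)) \<le> T * (traj y x \<omega> t - traj y x \<omega> (Suc t))"
        using D0 by (intro mult_right_mono) auto
      moreover have "0 \<le> pos (\<omega> t - T) * (\<Prod>s<t. indicator {..<T} (\<omega> s))"
        by (intro mult_nonneg_nonneg prod_nonneg) (auto simp: pos_def)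
      ultimately show ?thesis by linarith
    next
      case False
      then have pe: "pos (\<omega> t - T) = \<omega> t - T" by (simp add: pos_def)
      have le: "(\<omega> t - T) * (traj y x \<omega> t - traj y x \<omega> (Suc t)) \<le> (\<omega> t - T) * (\<Prod>s<t. indicator {..<T} (\<omega> s))"
        using False D1 by (intro mult_left_mono) auto
      show ?thesis unfolding pe using le by (simp add: algebra_simps)
    qed
  qed
  also have "\<dots> = T * (\<integral>\<omega>. traj y x \<omega> t - traj y x \<omega> (Suc t) \<partial>Om)
      + (\<integral>\<omega>. pos (\<omega> t - T) * (\<Prod>s<t. indicator {..<T} (\<omega> s)) \<partial>Om)"
    using int_traj int_pos_prod_ind(2)[OF T0, of t] by simp
  also have "\<dots> \<le> T * (\<integral>\<omega>. traj y x \<omega> t - traj y x \<omega> (Suc t) \<partial>Om) + exp (- T) * (1 - exp (- T)) ^ t"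
    using int_pos_prod_ind(1)[OF T0, of t] by simp
  finally show ?thesis .
qed

lemma V_upper: "Vbar \<beta> y x \<le> T + 1 - 1/2 * (\<Sum>t. \<beta> ^ t * (\<integral>\<omega>. (traj y x \<omega> (Suc t))\<^sup>2 \<partial>Om))"
proof -
  let ?d = "\<lambda>t. \<integral>\<omega>. traj y x \<omega> t - traj y x \<omega> (Suc t) \<partial>Om"
  let ?g = "\<lambda>t. exp (- T) * (1 - exp (- T)) ^ t"
  have e: "0 < exp (- T)" "exp (- T) \<le> 1" using T0 by auto
  have gs: "?g sums (exp (- T) * (1 / (1 - (1 - exp (- T)))))"
    using e by (intro sums_mult geometric_sums) auto
  then have gs': "?g sums 1" using e by simp
  have "(\<Sum>t. \<beta> ^ t * (\<integral>\<omega>. \<omega> t * (traj y x \<omega> t - traj y x \<omega> (Suc t)) \<partial>Om)) \<le> (\<Sum>t. T * ?d t + ?g t)"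
  proof (rule suminf_le[OF _ sum_bu])
    show "summable (\<lambda>t. T * ?d t + ?g t)"
      using d_sum(1) gs' by (intro summable_add summable_mult) (auto simp: sums_iff)
    fix t
    have "\<beta> ^ t * (\<integral>\<omega>. \<omega> t * (traj y x \<omega> t - traj y x \<omega> (Suc t)) \<partial>Om)
        \<le> (\<integral>\<omega>. \<omega> t * (traj y x \<omega> t - traj y x \<omega> (Suc t)) \<partial>Om)"
      using u_nonneg[of t] b0 b1 by (intro mult_left_le_one_le) (auto intro: power_le_one)
    also have "\<dots> \<le> T * ?d t + ?g t" by (rule u_upper)
    finally show "\<beta> ^ t * (\<integral>\<omega>. \<omega> t * (traj y x \<omega> t - traj y x \<omega> (Suc t)) \<partial>Om) \<le> T * ?d t + ?g t" .
  qed
  also have "\<dots> = T * (\<Sum>t. ?d t) + 1"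
    using d_sum(1) gs' by (subst suminf_add[symmetric]) (auto simp: sums_iff suminf_mult intro: summable_mult)
  also have "\<dots> \<le> T + 1"
    using d_sum(2) T0 by (simp add: mult_left_le)
  finally show ?thesis using Vbar_eq by simp
qed

lemma h_upper: "(\<integral>\<omega>. (traj y x \<omega> (Suc t))\<^sup>2 \<partial>Om) \<le> (1 - exp (- T)) ^ Suc t"
proof -
  have "(\<integral>\<omega>. (traj y x \<omega> (Suc t))\<^sup>2 \<partial>Om) \<le> (\<integral>\<omega>. (\<Prod>s<Suc t. indicator {..<T} (\<omega> s)) \<partial>Om)"
  proof (rule integral_mono[OF int_hold[OF pol ym b0 b1 x0 x1]])
    show "integrable Om (\<lambda>\<omega>. \<Prod>s<Suc t. indicator {..<T} (\<omega> s) :: real)"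
      using int_prod_ind_int[of "{..<T}" 1 "Suc t"] by simp
    fix \<omega> :: "nat \<Rightarrow> real"
    have a: "0 \<le> traj y x \<omega> (Suc t)" "traj y x \<omega> (Suc t) \<le> 1"
      using traj_bnd[OF pol x0, of \<omega> "Suc t"] x1 by auto
    have "(traj y x \<omega> (Suc t))\<^sup>2 \<le> traj y x \<omega> (Suc t)"
      using a by (simp add: power2_eq_square mult_left_le_one_le)
    also have "\<dots> \<le> x * (\<Prod>s<Suc t. indicator {..<T} (\<omega> s))" by (rule traj_sell[OF pol x0 sell])
    also have "\<dots> \<le> (\<Prod>s<Suc t. indicator {..<T} (\<omega> s))"
      using x0 x1 by (intro mult_left_le_one_le prod_nonneg) auto
    finally show "(traj y x \<omega> (Suc t))\<^sup>2 \<le> (\<Prod>s<Suc t. indicator {..<T} (\<omega> s))" .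
  qed
  also have "\<dots> = (measure Pexp {..<T}) ^ Suc t" by (rule int_prod_ind) auto
  also have "\<dots> \<le> (1 - exp (- T)) ^ Suc t"
    using meas_Pexp_lt[OF T0] by (intro power_mono) auto
  finally show ?thesis .
qed

end

lemma h_lower:
  assumes c0: "0 \<le> c" and cx: "c \<le> x" and a0: "0 \<le> a"
    and low: "\<And>x' p. c \<le> x' \<Longrightarrow> p \<le> a \<Longrightarrow> c \<le> y x' p"
  shows "c\<^sup>2 * (1 - exp (- a)) ^ Suc t \<le> (\<integral>\<omega>. (traj y x \<omega> (Suc t))\<^sup>2 \<partial>Om)"
proof -
  have "c\<^sup>2 * (1 - exp (- a)) ^ Suc t = (\<integral>\<omega>. c\<^sup>2 * (\<Prod>s<Suc t. indicator {..a} (\<omega> s)) \<partial>Om)"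
    using int_prod_ind[of "{..a}" "Suc t"] meas_Pexp_le[OF a0] by simp
  also have "\<dots> \<le> (\<integral>\<omega>. (traj y x \<omega> (Suc t))\<^sup>2 \<partial>Om)"
  proof (rule integral_mono[OF _ int_hold[OF pol ym b0 b1 x0 x1]])
    show "integrable Om (\<lambda>\<omega>. c\<^sup>2 * (\<Prod>s<Suc t. indicator {..a} (\<omega> s) :: real))"
      by (rule int_prod_ind_int) auto
    fix \<omega> :: "nat \<Rightarrow> real"
    let ?P = "\<Prod>s<Suc t. indicator {..a} (\<omega> s) :: real"
    have P01: "?P = 0 \<or> ?P = 1" by (rule prod_ind_01)
    have l: "c * ?P \<le> traj y x \<omega> (Suc t)" by (rule traj_low[OF pol c0 cx low])
    show "c\<^sup>2 * ?P \<le> (traj y x \<omega> (Suc t))\<^sup>2"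
      using P01
    proof
      assume P0: "?P = 0" show ?thesis unfolding P0 by simp
    next
      assume P1: "?P = 1"
      have "c \<le> traj y x \<omega> (Suc t)" using l unfolding P1 by simp
      then have "c\<^sup>2 \<le> (traj y x \<omega> (Suc t))\<^sup>2" using c0 by (simp add: power_mono)
      then show ?thesis unfolding P1 by simp
    qed
  qed
  finally show ?thesis .
qed

end



lemma pol_proj: "pol (\<lambda>x p. proj 0 x (g x p))"
  by (auto simp: pol_def proj_def)

lemma proj_nonpos: "z \<le> 0 \<Longrightarrow> proj 0 x z = 0"
  by (simp add: proj_def)

lemma pol_yS: "pol (yS \<beta> N ps)"
  unfolding yS_def by (rule pol_proj)

lemma pol_yM: "pol (yM \<beta> N ps)"
  unfolding yM_def by (rule pol_proj)

lemma meas_yS: "case_prod (yS \<beta> N ps) \<in> borel_measurable (borel \<Otimes>\<^sub>M borel)"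
proof -
  have e: "case_prod (yS \<beta> N ps) = (\<lambda>z. max 0 (min (fst z) (\<beta> * ((1 / real N) * (\<Sum>i<N. max (ps i - snd z) 0)) - (1 - \<beta>) * snd z)))"
    by (auto simp: fun_eq_iff yS_def proj_def pos_def)
  show ?thesis unfolding e by measurable
qed

lemma meas_yM: "case_prod (yM \<beta> N ps) \<in> borel_measurable (borel \<Otimes>\<^sub>M borel)"
proof -
  have e: "case_prod (yM \<beta> N ps) = (\<lambda>z. max 0 (min (fst z) (\<beta> * max ((1 / real N) * (\<Sum>i<N. ps i) - snd z) 0 - (1 - \<beta>) * snd z)))"
    by (auto simp: fun_eq_iff yM_def proj_def pos_def)
  show ?thesis unfolding e by measurable
qed

abbreviation Sps :: "nat \<Rightarrow> (nat \<Rightarrow> real) \<Rightarrow> real" where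
  "Sps N ps \<equiv> (\<Sum>i<N. pos (ps i))"

lemma sell_yS:
  assumes "\<beta> \<le> 1" "0 \<le> x" "Sps N ps \<le> p"
  shows "yS \<beta> N ps x p = 0"
proof -
  have "pos (ps i - p) = 0" if "i < N" for i
  proof -
    have "ps i \<le> pos (ps i)" by (simp add: pos_def)
    also have "pos (ps i) \<le> Sps N ps"
      using that by (intro member_le_sum) (auto simp: pos_def)
    finally show ?thesis using assms by (simp add: pos_def)
  qed
  then have "(\<Sum>i<N. pos (ps i - p)) = 0" by simp
  moreover have "0 \<le> p" using assms(3) by (smt (verit) pos_def sum_nonneg)
  moreover have "0 \<le> (1 - \<beta>) * p" using assms(1) \<open>0 \<le> p\<close> by simp
  ultimately have "\<beta> * ((1 / real N) * (\<Sum>i<N. pos (ps i - p))) - (1 - \<beta>) * p \<le> 0" by simp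
  then show ?thesis unfolding yS_def by (rule proj_nonpos)
qed

lemma sell_yM:
  assumes "\<beta> \<le> 1" "0 \<le> x" "pos ((1 / real N) * (\<Sum>i<N. ps i)) \<le> p"
  shows "yM \<beta> N ps x p = 0"
proof -
  have "pos ((1 / real N) * (\<Sum>i<N. ps i) - p) = 0" using assms(3) by (simp add: pos_def)
  moreover have "0 \<le> p" using assms(3) by (simp add: pos_def)
  moreover have "0 \<le> (1 - \<beta>) * p" using assms(1) \<open>0 \<le> p\<close> by simp
  ultimately have "\<beta> * pos ((1 / real N) * (\<Sum>i<N. ps i) - p) - (1 - \<beta>) * p \<le> 0" by simp
  then show ?thesis unfolding yM_def by (rule proj_nonpos)
qed

lemma low_yS:
  assumes N: "1 \<le> N" and b: "1/2 \<le> \<beta>" "\<beta> \<le> 1" and bL: "(1 - \<beta>) * L \<le> 1 / (4 * real N)"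
    and k: "k \<le> L" "k < ps 0" and cx: "1 / (4 * real N) \<le> x'" and p: "p \<le> k - 1"
  shows "1 / (4 * real N) \<le> yS \<beta> N ps x' p"
proof -
  have Npos: "0 < real N" using N by simp
  have "pos (ps 0 - p) \<le> (\<Sum>i<N. pos (ps i - p))"
    using N by (intro member_le_sum) (auto simp: pos_def)
  moreover have "1 \<le> pos (ps 0 - p)" using k p by (simp add: pos_def)
  ultimately have s1: "1 \<le> (\<Sum>i<N. pos (ps i - p))" by linarith
  have A: "(1/2) * (1 / real N) \<le> \<beta> * ((1 / real N) * (\<Sum>i<N. pos (ps i - p)))"
  proof -
    have "(1 / real N) * 1 \<le> (1 / real N) * (\<Sum>i<N. pos (ps i - p))"
      using s1 Npos by (intro mult_left_mono) auto
    then show ?thesis using b Npos by (intro mult_mono) auto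
  qed
  have B: "(1 - \<beta>) * p \<le> 1 / (4 * N)"
  proof (cases "0 \<le> p")
    case True
    have "p \<le> L" using p k by linarith
    then have "(1 - \<beta>) * p \<le> (1 - \<beta>) * L" using b by (intro mult_left_mono) auto
    then show ?thesis using bL by linarith
  next
    case False
    then have "(1 - \<beta>) * p \<le> 0" using b by (simp add: mult_nonneg_nonpos)
    moreover have "0 \<le> 1 / (4 * real N)" using Npos by simp
    ultimately show ?thesis by linarith
  qed
  have e: "(1/2) * (1 / real N) = 1 / (4 * N) + 1 / (4 * N)" using Npos by simp
  have z: "1 / (4 * N) \<le> \<beta> * ((1 / real N) * (\<Sum>i<N. pos (ps i - p))) - (1 - \<beta>) * p"
    using A B e by linarith
  show ?thesis using z cx by (simp add: yS_def proj_def)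
qed


abbreviation PsN :: "nat \<Rightarrow> (nat \<Rightarrow> real) measure" where
  "PsN N \<equiv> PiM {..<N} (\<lambda>_. Pexp)"

lemma prob_PsN: "prob_space (PsN N)"
proof -
  interpret product_prob_space "\<lambda>_::nat. Pexp" "{..<N}" by (rule pps)
  show ?thesis by (rule P.prob_space_axioms)
qed

lemma meas_comp: "i \<in> I \<Longrightarrow> (\<lambda>ps. ps i) \<in> borel_measurable (PiM I (\<lambda>_. Pexp))"
  by (subst measurable_cong_sets[OF refl sets_Pexp, symmetric]) (rule measurable_component_singleton)

lemma meas_pos_comp: "i < N \<Longrightarrow> (\<lambda>ps. pos (ps i)) \<in> borel_measurable (PsN N)"
  unfolding pos_def by (intro borel_measurable_max meas_comp) auto

lemma int_pos_comp: "i < N \<Longrightarrow> integrable (PsN N) (\<lambda>ps. pos (ps i))"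
proof -
  assume i: "i < N"
  have "(\<integral>\<^sup>+ps. ennreal (norm (pos (ps i))) \<partial>PsN N) = (\<integral>\<^sup>+x. ennreal (pos x) \<partial>Pexp)"
    using i nn_comp[of i "{..<N}" "\<lambda>x. ennreal (norm (pos x))"] by (simp add: pos_def)
  then show ?thesis using nn_Pexp_pos meas_pos_comp[OF i] by (intro integrableI_bounded) auto
qed

lemma int_pos_comp_eq: "i < N \<Longrightarrow> (\<integral>ps. pos (ps i) \<partial>PsN N) = 1"
proof -
  assume i: "i < N"
  have "(\<integral>\<^sup>+ps. ennreal (pos (ps i)) \<partial>PsN N) = (\<integral>\<^sup>+x. ennreal (pos x) \<partial>Pexp)"
    using i nn_comp[of i "{..<N}" "\<lambda>x. ennreal (pos x)"] by (simp add: pos_def)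
  then have "(\<integral>\<^sup>+ps. ennreal (pos (ps i)) \<partial>PsN N) = ennreal 1" using nn_Pexp_pos by simp
  then show ?thesis using meas_pos_comp[OF i]
    by (subst (asm) nn_integral_eq_integrable) (auto simp: pos_def)
qed

lemma int_S: "integrable (PsN N) (\<lambda>ps. Sps N ps + c)"
proof -
  interpret prob_space "PsN N" by (rule prob_PsN)
  have "integrable (PsN N) (\<lambda>ps. \<Sum>i\<in>{..<N}. pos (ps i))"
    by (rule Bochner_Integration.integrable_sum[where I="{..<N}" and f="\<lambda>i ps. pos (ps i)"]) (auto intro: int_pos_comp)
  then show ?thesis by auto
qed

lemma int_S_eq: "(\<integral>ps. Sps N ps + c \<partial>PsN N) = real N + c"
proof -
  interpret prob_space "PsN N" by (rule prob_PsN)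
  have "(\<integral>ps. Sps N ps + c \<partial>PsN N) = (\<integral>ps. Sps N ps \<partial>PsN N) + c"
    using int_S[of N 0] by (subst Bochner_Integration.integral_add) (auto simp: prob_space)
  also have "(\<integral>ps. Sps N ps \<partial>PsN N) = (\<Sum>i<N. \<integral>ps. pos (ps i) \<partial>PsN N)"
    by (rule Bochner_Integration.integral_sum[where I="{..<N}" and f="\<lambda>i ps. pos (ps i)"]) (auto intro: int_pos_comp)
  also have "\<dots> = real N" using int_pos_comp_eq by simp
  finally show ?thesis .
qed

lemma int_expprod:
  assumes N: "2 \<le> N"
  shows "integrable (PsN N) (\<lambda>ps. c * (\<Prod>i<N. exp ((1 / real N) * pos (ps i))))"
proof -
  have r: "0 \<le> 1 / real N" "1 / real N < 1" using N by auto
  have "(\<integral>\<^sup>+ps. ennreal (norm (\<Prod>i<N. exp ((1 / real N) * pos (ps i)))) \<partial>PsN N)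
      = (\<integral>\<^sup>+ps. (\<Prod>i\<in>{..<N}. (\<lambda>i x. ennreal (exp ((1 / real N) * pos x))) i (ps i)) \<partial>PsN N)"
    by (intro nn_integral_cong) (simp add: prod_ennreal abs_prod)
  also have "\<dots> = (\<Prod>i\<in>{..<N}. \<integral>\<^sup>+x. ennreal (exp ((1 / real N) * pos x)) \<partial>Pexp)"
    by (intro nn_prod) (auto simp: pos_def)
  also have "\<dots> = (\<Prod>i\<in>{..<N}. ennreal (1 / (1 - 1 / real N)))"
    using nn_Pexp_exp[OF r] by simp
  also have "\<dots> < \<infinity>" by (simp add: power_less_top_ennreal)
  finally have "integrable (PsN N) (\<lambda>ps. \<Prod>i<N. exp ((1 / real N) * pos (ps i)))"
    using meas_pos_comp by (intro integrableI_bounded borel_measurable_prod) auto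
  then show ?thesis by simp
qed

lemma VM_bounds:
  assumes N: "1 \<le> N" and b0: "0 \<le> \<beta>" and b1: "\<beta> < 1"
  shows "Vbar \<beta> (yM \<beta> N ps) 1 \<le> Sps N ps + 1"
    "- (1/2) * (\<Prod>i<N. exp ((1 / real N) * pos (ps i))) \<le> Vbar \<beta> (yM \<beta> N ps) 1"
proof -
  define T where "T = pos ((1 / real N) * (\<Sum>i<N. ps i))"
  have T0: "0 \<le> T" by (simp add: T_def pos_def)
  have Npos: "0 < real N" using N by simp
  note A = pol_yM[of \<beta> N ps] meas_yM[of \<beta> N ps] b0 b1
  have sell: "\<And>x p. 0 \<le> x \<Longrightarrow> T \<le> p \<Longrightarrow> yM \<beta> N ps x p = 0"
    using sell_yM b1 unfolding T_def by auto
  have TS0: "(1 / real N) * (\<Sum>i<N. ps i) \<le> (1 / real N) * Sps N ps"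
    using Npos by (intro mult_left_mono sum_mono) (auto simp: pos_def)
  have Sn: "0 \<le> Sps N ps" by (intro sum_nonneg) (auto simp: pos_def)
  have TS: "T \<le> (1 / real N) * Sps N ps"
    using TS0 Sn Npos by (auto simp: T_def pos_def)
  have "(1 / real N) * Sps N ps \<le> 1 * Sps N ps"
    using Sn N by (intro mult_right_mono) auto
  then have TS': "T \<le> Sps N ps" using TS by simp
  have hs: "0 \<le> (\<Sum>t. \<beta> ^ t * (\<integral>\<omega>. (traj (yM \<beta> N ps) 1 \<omega> (Suc t))\<^sup>2 \<partial>Om))"
    using h_nonneg[OF A] b0 by (intro suminf_nonneg sum_bh[OF A zero_le_one order_refl]) auto
  show "Vbar \<beta> (yM \<beta> N ps) 1 \<le> Sps N ps + 1"
    using V_upper[OF A zero_le_one order_refl T0 sell] hs TS' by simp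
  let ?q = "1 - exp (- T)"
  have q: "0 \<le> ?q" "?q < 1" using T0 by auto
  have "(\<lambda>t. ?q * ?q ^ t) sums (?q * (1 / (1 - ?q)))"
    by (rule sums_mult[OF geometric_sums]) (use q in auto)
  then have qs: "(\<lambda>t. ?q ^ Suc t) sums (?q * (1 / (1 - ?q)))" by simp
  have "(\<Sum>t. \<beta> ^ t * (\<integral>\<omega>. (traj (yM \<beta> N ps) 1 \<omega> (Suc t))\<^sup>2 \<partial>Om)) \<le> (\<Sum>t. ?q ^ Suc t)"
  proof (rule suminf_le[OF _ sum_bh[OF A zero_le_one order_refl]])
    show "summable (\<lambda>t. ?q ^ Suc t)" using qs by (simp add: sums_iff)
    fix t
    have "\<beta> ^ t * (\<integral>\<omega>. (traj (yM \<beta> N ps) 1 \<omega> (Suc t))\<^sup>2 \<partial>Om) \<le> (\<integral>\<omega>. (traj (yM \<beta> N ps) 1 \<omega> (Suc t))\<^sup>2 \<partial>Om)"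
      using h_nonneg[OF A] b0 b1 by (intro mult_left_le_one_le) (auto intro: power_le_one)
    also have "\<dots> \<le> ?q ^ Suc t" by (rule h_upper[OF A zero_le_one order_refl T0 sell])
    finally show "\<beta> ^ t * (\<integral>\<omega>. (traj (yM \<beta> N ps) 1 \<omega> (Suc t))\<^sup>2 \<partial>Om) \<le> ?q ^ Suc t" .
  qed
  also have "\<dots> = ?q * exp T"
    using qs by (simp add: sums_iff exp_minus field_simps)
  also have "\<dots> \<le> exp T" using q by simp
  also have "\<dots> \<le> exp ((1 / real N) * Sps N ps)" using TS by simp
  also have "\<dots> = (\<Prod>i<N. exp ((1 / real N) * pos (ps i)))"
    by (simp add: sum_distrib_left exp_sum)
  finally have "(\<Sum>t. \<beta> ^ t * (\<integral>\<omega>. (traj (yM \<beta> N ps) 1 \<omega> (Suc t))\<^sup>2 \<partial>Om)) \<le> (\<Prod>i<N. exp ((1 / real N) * pos (ps i)))" .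
  then show "- (1/2) * (\<Prod>i<N. exp ((1 / real N) * pos (ps i))) \<le> Vbar \<beta> (yM \<beta> N ps) 1"
    using V_lower[OF A zero_le_one order_refl] by linarith
qed

lemma EVM_bounded:
  assumes N: "2 \<le> N"
  shows "\<exists>B::real. \<forall>\<^sub>F \<beta> in at_left 1. \<bar>EVM N \<beta>\<bar> \<le> B"
proof -
  define U where "U = (\<integral>ps. Sps N ps + 1 \<partial>PsN N)"
  define L where "L = (\<integral>ps. - (1/2) * (\<Prod>i<N. exp ((1 / real N) * pos (ps i))) \<partial>PsN N)"
  have "\<forall>\<^sub>F \<beta> in at_left 1. \<bar>EVM N \<beta>\<bar> \<le> \<bar>U\<bar> + \<bar>L\<bar>"
    using eventually_at_left_real[OF zero_less_one]
  proof (rule eventually_mono)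
    fix \<beta> :: real assume "\<beta> \<in> {0<..<1}"
    then have b: "0 \<le> \<beta>" "\<beta> < 1" by auto
    show "\<bar>EVM N \<beta>\<bar> \<le> \<bar>U\<bar> + \<bar>L\<bar>"
    proof (cases "integrable (PsN N) (\<lambda>ps. Vbar \<beta> (yM \<beta> N ps) 1)")
      case True
      have "EVM N \<beta> \<le> U"
        unfolding EVM_def U_def
        using True int_S VM_bounds(1)[OF _ b] N by (intro integral_mono) auto
      moreover have "L \<le> EVM N \<beta>"
        unfolding EVM_def L_def
        by (rule integral_mono[OF int_expprod[OF N] True]) (use VM_bounds(2)[OF _ b] N in auto)
      ultimately show ?thesis by linarith
    next
      case False
      then have "EVM N \<beta> = 0" unfolding EVM_def by (rule not_integrable_integral_eq)
      then show ?thesis by simp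
    qed
  qed
  then show ?thesis by blast
qed



lemma meas_fst_comp: "i < N \<Longrightarrow> (\<lambda>z. fst z i) \<in> borel_measurable (PsN N \<Otimes>\<^sub>M Om)"
  using measurable_compose[OF measurable_fst meas_comp[of i "{..<N}"]] by (simp add: comp_def)

lemma meas_snd_comp: "(\<lambda>z. snd z t) \<in> borel_measurable (PsN N \<Otimes>\<^sub>M Om)"
  using measurable_compose[OF measurable_snd meas_comp[of t UNIV]] by (simp add: comp_def)

lemma yS_joint:
  assumes [measurable]: "A \<in> borel_measurable (PsN N \<Otimes>\<^sub>M Om)" "P \<in> borel_measurable (PsN N \<Otimes>\<^sub>M Om)"
  shows "(\<lambda>z. yS \<beta> N (fst z) (A z) (P z)) \<in> borel_measurable (PsN N \<Otimes>\<^sub>M Om)"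
proof -
  have s[measurable]: "(\<lambda>z. \<Sum>i<N. max (fst z i - P z) 0) \<in> borel_measurable (PsN N \<Otimes>\<^sub>M Om)"
    by (intro borel_measurable_sum borel_measurable_max borel_measurable_diff meas_fst_comp) auto
  show ?thesis unfolding yS_def proj_def pos_def by measurable
qed

lemma traj_joint: "(\<lambda>z. traj (yS \<beta> N (fst z)) x (snd z) t) \<in> borel_measurable (PsN N \<Otimes>\<^sub>M Om)"
proof (induction t)
  case 0 then show ?case by simp
next
  case (Suc t)
  show ?case
    unfolding traj.simps by (rule yS_joint[OF Suc meas_snd_comp])
qed

lemma Vbar_S_meas: "(\<lambda>ps. Vbar \<beta> (yS \<beta> N ps) 1) \<in> borel_measurable (PsN N)"
proof -
  interpret Om: sigma_finite_measure Om
    using prob_Om by (rule prob_space_imp_sigma_finite)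
  note [measurable] = traj_joint meas_snd_comp
  have "(\<lambda>z. \<Sum>t. \<beta> ^ t * (snd z t * (traj (yS \<beta> N (fst z)) 1 (snd z) t - traj (yS \<beta> N (fst z)) 1 (snd z) (Suc t))
        - (1/2) * (traj (yS \<beta> N (fst z)) 1 (snd z) (Suc t))\<^sup>2)) \<in> borel_measurable (PsN N \<Otimes>\<^sub>M Om)"
    by measurable
  then have "(\<lambda>ps. \<integral>\<omega>. (\<Sum>t. \<beta> ^ t * (\<omega> t * (traj (yS \<beta> N ps) 1 \<omega> t - traj (yS \<beta> N ps) 1 \<omega> (Suc t))
        - (1/2) * (traj (yS \<beta> N ps) 1 \<omega> (Suc t))\<^sup>2)) \<partial>Om) \<in> borel_measurable (PsN N)"
    by (intro Om.borel_measurable_lebesgue_integral) (simp add: split_beta')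
  then show ?thesis unfolding Vbar_def .
qed



lemma key_ineq:
  fixes k L \<beta> :: real
  assumes k: "2 \<le> k" "k \<le> L" and b: "0 \<le> \<beta>" "\<beta> < 1" and bL: "1 - \<beta> \<le> exp (1 - L)"
  shows "exp (k - 1) / 4 \<le> (1 - exp (- (k - 1))) / (1 - \<beta> * (1 - exp (- (k - 1))))"
proof -
  define e where "e = exp (1 - k)"
  have e_eq: "exp (- (k - 1)) = e" by (simp add: e_def)
  have e0: "0 < e" by (simp add: e_def)
  have "e \<le> exp (-1)" unfolding e_def using k by simp
  moreover have "exp (-1::real) \<le> 1/2"
  proof -
    have "2 \<le> exp (1::real)" using exp_ge_add_one_self[of 1] by simp
    then show ?thesis by (simp add: exp_minus field_simps)
  qed
  ultimately have e2: "e \<le> 1/2" by simp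
  have "exp (1 - L) \<le> e" unfolding e_def using k by simp
  moreover have "\<beta> * e \<le> e" using b e0 by (intro mult_left_le_one_le) auto
  moreover have "1 - \<beta> * (1 - e) = (1 - \<beta>) + \<beta> * e" by (simp add: algebra_simps)
  ultimately have d: "1 - \<beta> * (1 - e) \<le> 2 * e" using bL by linarith
  have dpos: "0 < 1 - \<beta> * (1 - e)"
  proof -
    have "\<beta> * (1 - e) \<le> 1 - e" using b e2 by (intro mult_left_le_one_le) auto
    then show ?thesis using e0 by simp
  qed
  have "exp (k - 1) / 4 = (1/2) / (2 * e)"
    unfolding e_def by (simp add: exp_diff exp_minus field_simps)
  also have "\<dots> \<le> (1 - e) / (2 * e)"
    using e2 e0 by (intro divide_right_mono) auto
  also have "\<dots> \<le> (1 - e) / (1 - \<beta> * (1 - e))"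
    using e2 d dpos by (intro divide_left_mono) auto
  finally show ?thesis unfolding e_eq .
qed

definition Gf :: "nat \<Rightarrow> nat \<Rightarrow> (nat \<Rightarrow> real) \<Rightarrow> real" where
  "Gf N L ps = (\<Sum>k\<in>{2..L}. (1 / (4 * real N))\<^sup>2 / 8 * exp (real k - 1) * indicator {real k<..real k + 1} (ps 0))"

lemma VS_bounds:
  assumes N: "1 \<le> N" and b0: "0 \<le> \<beta>" and b1: "\<beta> < 1"
  shows "Vbar \<beta> (yS \<beta> N ps) 1 \<le> Sps N ps + 1 - 1/2 * (\<Sum>t. \<beta> ^ t * (\<integral>\<omega>. (traj (yS \<beta> N ps) 1 \<omega> (Suc t))\<^sup>2 \<partial>Om))"
    "0 \<le> (\<Sum>t. \<beta> ^ t * (\<integral>\<omega>. (traj (yS \<beta> N ps) 1 \<omega> (Suc t))\<^sup>2 \<partial>Om))"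
    "- 1 / (2 * (1 - \<beta>)) \<le> Vbar \<beta> (yS \<beta> N ps) 1"
proof -
  note A = pol_yS[of \<beta> N ps] meas_yS[of \<beta> N ps] b0 b1 zero_le_one order_refl
  have S0: "0 \<le> Sps N ps" by (intro sum_nonneg) (auto simp: pos_def)
  have sell: "\<And>x p. 0 \<le> x \<Longrightarrow> Sps N ps \<le> p \<Longrightarrow> yS \<beta> N ps x p = 0"
    using sell_yS b1 by auto
  show "Vbar \<beta> (yS \<beta> N ps) 1 \<le> Sps N ps + 1 - 1/2 * (\<Sum>t. \<beta> ^ t * (\<integral>\<omega>. (traj (yS \<beta> N ps) 1 \<omega> (Suc t))\<^sup>2 \<partial>Om))"
    by (rule V_upper[OF A S0 sell])
  show "0 \<le> (\<Sum>t. \<beta> ^ t * (\<integral>\<omega>. (traj (yS \<beta> N ps) 1 \<omega> (Suc t))\<^sup>2 \<partial>Om))"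
    using h_nonneg[OF A] b0 by (intro suminf_nonneg sum_bh[OF A]) auto
  have "(\<Sum>t. \<beta> ^ t * (\<integral>\<omega>. (traj (yS \<beta> N ps) 1 \<omega> (Suc t))\<^sup>2 \<partial>Om)) \<le> (\<Sum>t. \<beta> ^ t)"
  proof (rule suminf_le[OF _ sum_bh[OF A]])
    show "summable (\<lambda>t. \<beta> ^ t)" using b0 b1 by (intro summable_geometric) auto
    fix t
    show "\<beta> ^ t * (\<integral>\<omega>. (traj (yS \<beta> N ps) 1 \<omega> (Suc t))\<^sup>2 \<partial>Om) \<le> \<beta> ^ t"
      using h_le1[OF A] b0 by (intro mult_left_le) auto
  qed
  also have "\<dots> = 1 / (1 - \<beta>)" using b0 b1 by (intro suminf_geometric) auto
  finally have h1: "1/2 * (\<Sum>t. \<beta> ^ t * (\<integral>\<omega>. (traj (yS \<beta> N ps) 1 \<omega> (Suc t))\<^sup>2 \<partial>Om)) \<le> 1/2 * (1 / (1 - \<beta>))"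
    by (rule mult_left_mono) simp
  have "- 1 / (2 * (1 - \<beta>)) = - (1/2 * (1 / (1 - \<beta>)))" by simp
  also have "\<dots> \<le> - (1/2 * (\<Sum>t. \<beta> ^ t * (\<integral>\<omega>. (traj (yS \<beta> N ps) 1 \<omega> (Suc t))\<^sup>2 \<partial>Om)))"
    using h1 by (simp only: neg_le_iff_le)
  also have "\<dots> = - 1/2 * (\<Sum>t. \<beta> ^ t * (\<integral>\<omega>. (traj (yS \<beta> N ps) 1 \<omega> (Suc t))\<^sup>2 \<partial>Om))"
    by simp
  also have "\<dots> \<le> Vbar \<beta> (yS \<beta> N ps) 1" by (rule V_lower[OF A])
  finally show "- 1 / (2 * (1 - \<beta>)) \<le> Vbar \<beta> (yS \<beta> N ps) 1" .
qed



lemma VS_G: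
  assumes N: "1 \<le> N" and b: "1/2 \<le> \<beta>" "\<beta> < 1" and bL: "(1 - \<beta>) * real L \<le> 1 / (4 * real N)"
    and bE: "1 - \<beta> \<le> exp (1 - real L)"
  shows "Gf N L ps \<le> 1/2 * (\<Sum>t. \<beta> ^ t * (\<integral>\<omega>. (traj (yS \<beta> N ps) 1 \<omega> (Suc t))\<^sup>2 \<partial>Om))"
proof -
  have b0: "0 \<le> \<beta>" using b by simp
  note A = pol_yS[of \<beta> N ps] meas_yS[of \<beta> N ps] b0 b(2) zero_le_one order_refl
  let ?H = "\<Sum>t. \<beta> ^ t * (\<integral>\<omega>. (traj (yS \<beta> N ps) 1 \<omega> (Suc t))\<^sup>2 \<partial>Om)"
  have H0: "0 \<le> ?H" using VS_bounds(2)[OF N b0 b(2)] .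
  define c where "c = 1 / (4 * real N)"
  have c0: "0 \<le> c" and c1: "c \<le> 1" using N by (auto simp: c_def field_simps)
  show ?thesis
  proof (cases "\<exists>k\<in>{2..L}. real k < ps 0 \<and> ps 0 \<le> real k + 1")
    case False
    then have "Gf N L ps = 0" unfolding Gf_def by (intro sum.neutral) (auto simp: indicator_def)
    then show ?thesis using H0 by simp
  next
    case True
    then obtain k where k: "k \<in> {2..L}" "real k < ps 0" "ps 0 \<le> real k + 1" by blast
    have Gk: "Gf N L ps = c\<^sup>2 / 8 * exp (real k - 1)"
    proof -
      have "Gf N L ps = (1 / (4 * real N))\<^sup>2 / 8 * exp (real k - 1) * indicator {real k<..real k + 1} (ps 0)
          + (\<Sum>j\<in>{2..L} - {k}. (1 / (4 * real N))\<^sup>2 / 8 * exp (real j - 1) * indicator {real j<..real j + 1} (ps 0))"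
        unfolding Gf_def by (rule sum.remove) (use k(1) in auto)
      moreover have "(\<Sum>j\<in>{2..L} - {k}. (1 / (4 * real N))\<^sup>2 / 8 * exp (real j - 1) * indicator {real j<..real j + 1} (ps 0)) = 0"
      proof (intro sum.neutral ballI)
        fix j assume j: "j \<in> {2..L} - {k}"
        have "\<not> (real j < ps 0 \<and> ps 0 \<le> real j + 1)"
        proof
          assume h: "real j < ps 0 \<and> ps 0 \<le> real j + 1"
          then have "real j < real k + 1" "real k < real j + 1" using k by linarith+
          then have "real j < real (k + 1)" "real k < real (j + 1)" by simp_all
          then have "j < k + 1" "k < j + 1" by (simp_all only: of_nat_less_iff)
          then have "j = k" by simp
          then show False using j by simp
        qed
        then show "(1 / (4 * real N))\<^sup>2 / 8 * exp (real j - 1) * indicator {real j<..real j + 1} (ps 0) = 0"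
          by (simp add: indicator_def)
      qed
      moreover have "indicator {real k<..real k + 1} (ps 0) = (1::real)" using k by (simp add: indicator_def)
      ultimately show ?thesis unfolding c_def by simp
    qed
    define a where "a = real k - 1"
    have a0: "0 \<le> a" using k by (simp add: a_def)
    have kL: "real k \<le> real L" using k by simp
    have low: "c \<le> yS \<beta> N ps x' p" if "c \<le> x'" "p \<le> a" for x' p
      unfolding c_def
      by (rule low_yS[of N \<beta> "real L" "real k" ps x' p]) (use N b bL kL k that in \<open>simp_all add: c_def a_def\<close>)
    let ?q = "1 - exp (- a)"
    have q: "0 \<le> ?q" "?q < 1" using a0 by auto
    have hl: "c\<^sup>2 * ?q ^ Suc t \<le> (\<integral>\<omega>. (traj (yS \<beta> N ps) 1 \<omega> (Suc t))\<^sup>2 \<partial>Om)" for t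
      by (rule h_lower[OF A c0 c1 a0 low])
    have bq1: "\<beta> * ?q \<le> ?q" using b q by (intro mult_left_le_one_le) auto
    have bq0: "0 \<le> \<beta> * ?q" using b0 q by simp
    have bq: "norm (\<beta> * ?q) < 1"
    proof -
      have "norm (\<beta> * ?q) = \<beta> * ?q" using bq0 by simp
      then show ?thesis using bq1 q(2) by linarith
    qed
    have gs: "(\<lambda>t. c\<^sup>2 * ?q * (\<beta> * ?q) ^ t) sums (c\<^sup>2 * ?q * (1 / (1 - \<beta> * ?q)))"
      by (rule sums_mult[OF geometric_sums[OF bq]])
    have sH: "(\<Sum>t. c\<^sup>2 * ?q * (\<beta> * ?q) ^ t) \<le> ?H"
    proof (rule suminf_le[OF _ sums_summable[OF gs] sum_bh[OF A]])
      fix t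
      have "c\<^sup>2 * ?q * (\<beta> * ?q) ^ t = \<beta> ^ t * (c\<^sup>2 * ?q ^ Suc t)"
        by (simp add: power_mult_distrib)
      also have "\<dots> \<le> \<beta> ^ t * (\<integral>\<omega>. (traj (yS \<beta> N ps) 1 \<omega> (Suc t))\<^sup>2 \<partial>Om)"
        using hl b0 by (intro mult_left_mono) auto
      finally show "c\<^sup>2 * ?q * (\<beta> * ?q) ^ t \<le> \<beta> ^ t * (\<integral>\<omega>. (traj (yS \<beta> N ps) 1 \<omega> (Suc t))\<^sup>2 \<partial>Om)" .
    qed
    have sE: "(\<Sum>t. c\<^sup>2 * ?q * (\<beta> * ?q) ^ t) = c\<^sup>2 * (?q / (1 - \<beta> * ?q))"
      using gs by (simp add: sums_iff)
    have kq: "exp (real k - 1) / 4 \<le> ?q / (1 - \<beta> * ?q)"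
    proof -
      have k2: "2 \<le> real k" using k by simp
      show ?thesis unfolding a_def by (rule key_ineq[OF k2 kL b0 b(2) bE])
    qed
    have "c\<^sup>2 * (exp (real k - 1) / 4) \<le> c\<^sup>2 * (?q / (1 - \<beta> * ?q))"
      using kq by (intro mult_left_mono) simp_all
    also have "\<dots> = (\<Sum>t. c\<^sup>2 * ?q * (\<beta> * ?q) ^ t)" by (rule sE[symmetric])
    also have "\<dots> \<le> ?H" by (rule sH)
    finally have "c\<^sup>2 * (exp (real k - 1) / 4) \<le> ?H" .
    then show ?thesis using Gk by simp
  qed
qed



lemma int_comp:
  fixes f :: "real \<Rightarrow> real"
  assumes "i \<in> I" and f[measurable]: "f \<in> borel_measurable borel"
  shows "(\<integral>ps. f (ps i) \<partial>PiM I (\<lambda>_. Pexp)) = (\<integral>x. f x \<partial>Pexp)"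
    "integrable Pexp f \<Longrightarrow> integrable (PiM I (\<lambda>_. Pexp)) (\<lambda>ps. f (ps i))"
proof -
  interpret product_prob_space "\<lambda>_. Pexp" I by (rule pps)
  have m: "(\<lambda>ps. ps i) \<in> measurable (PiM I (\<lambda>_. Pexp)) Pexp"
    using assms(1) by (rule measurable_component_singleton)
  have fm: "f \<in> borel_measurable Pexp" by (subst measurable_cong_sets[OF sets_Pexp refl]) (rule f)
  show "(\<integral>ps. f (ps i) \<partial>PiM I (\<lambda>_. Pexp)) = (\<integral>x. f x \<partial>Pexp)"
    using integral_distr[OF m fm] PiM_component[OF assms(1)] by simp
  show "integrable Pexp f \<Longrightarrow> integrable (PiM I (\<lambda>_. Pexp)) (\<lambda>ps. f (ps i))"
    using integrable_distr_eq[OF m fm] PiM_component[OF assms(1)] by simp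
qed

lemma meas_Ioc: "(k::real) \<ge> 0 \<Longrightarrow> measure Pexp {k<..k + 1} = exp (- k) - exp (- (k + 1))"
proof -
  assume k: "k \<ge> 0"
  interpret prob_space Pexp by (rule prob_Pexp)
  have "emeasure Pexp {k<..k + 1} = ennreal (exp (- k) - exp (- (k + 1)))"
    using Pexp_Ioc[OF k, of "k + 1"] by (simp add: greaterThanAtMost_def greaterThan_def atMost_def Collect_conj_eq[symmetric])
  moreover have "0 \<le> exp (- k) - exp (- (k + 1))" by simp
  ultimately show ?thesis by (simp add: emeasure_eq_measure)
qed

lemma int_ind0:
  assumes N: "1 \<le> N" and k: "(k::real) \<ge> 0"
  shows "(\<integral>ps. indicator {k<..k + 1} (ps 0) \<partial>PsN N) = exp (- k) - exp (- (k + 1))"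
    "integrable (PsN N) (\<lambda>ps. indicator {k<..k + 1} (ps 0) :: real)"
proof -
  interpret prob_space Pexp by (rule prob_Pexp)
  have i: "0 \<in> {..<N}" using N by simp
  show "(\<integral>ps. indicator {k<..k + 1} (ps 0) \<partial>PsN N) = exp (- k) - exp (- (k + 1))"
    using int_comp(1)[OF i, of "indicator {k<..k + 1}"] meas_Ioc[OF k] by simp
  show "integrable (PsN N) (\<lambda>ps. indicator {k<..k + 1} (ps 0) :: real)"
    by (rule int_comp(2)[OF i]) (auto intro!: integrable_real_indicator simp: less_top[symmetric] emeasure_finite)
qed

definition Dc :: "nat \<Rightarrow> real" where
  "Dc N = (1 / (4 * real N))\<^sup>2 / 8 * (exp (- 1) - exp (- 2))"

lemma Dc_pos: "1 \<le> N \<Longrightarrow> 0 < Dc N"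
  by (simp add: Dc_def)

lemma int_G:
  assumes N: "1 \<le> N" and L: "2 \<le> L"
  shows "integrable (PsN N) (Gf N L)" "(\<integral>ps. Gf N L ps \<partial>PsN N) = (real L - 1) * Dc N"
proof -
  let ?c = "(1 / (4 * real N))\<^sup>2 / 8"
  have ii: "integrable (PsN N) (\<lambda>ps. ?c * exp (real k - 1) * indicator {real k<..real k + 1} (ps 0))" for k
    using int_ind0(2)[OF N, of "real k"] by simp
  show "integrable (PsN N) (Gf N L)"
    unfolding Gf_def
    by (rule Bochner_Integration.integrable_sum[where I="{2..L}" and f="\<lambda>k ps. ?c * exp (real k - 1) * indicator {real k<..real k + 1} (ps 0)"]) (rule ii)
  have "(\<integral>ps. Gf N L ps \<partial>PsN N) = (\<Sum>k\<in>{2..L}. \<integral>ps. ?c * exp (real k - 1) * indicator {real k<..real k + 1} (ps 0) \<partial>PsN N)"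
    unfolding Gf_def
    by (rule Bochner_Integration.integral_sum[where I="{2..L}" and f="\<lambda>k ps. ?c * exp (real k - 1) * indicator {real k<..real k + 1} (ps 0)"]) (rule ii)
  also have "\<dots> = (\<Sum>k\<in>{2..L}. Dc N)"
  proof (rule sum.cong[OF refl])
    fix k assume k: "k \<in> {2..L}"
    have "(\<integral>ps. ?c * exp (real k - 1) * indicator {real k<..real k + 1} (ps 0) \<partial>PsN N)
        = ?c * exp (real k - 1) * (exp (- real k) - exp (- (real k + 1)))"
      using int_ind0(1)[OF N, of "real k"] by simp
    also have "\<dots> = ?c * (exp (real k - 1) * exp (- real k) - exp (real k - 1) * exp (- (real k + 1)))"
      by (simp add: right_diff_distrib)
    also have "exp (real k - 1) * exp (- real k) = exp (- 1)"
      by (simp add: mult_exp_exp)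
    also have "exp (real k - 1) * exp (- (real k + 1)) = exp (- 2)"
      by (simp add: mult_exp_exp)
    also have "?c * (exp (- 1) - exp (- 2)) = Dc N"
      unfolding Dc_def by simp
    finally show "(\<integral>ps. ?c * exp (real k - 1) * indicator {real k<..real k + 1} (ps 0) \<partial>PsN N) = Dc N" .
  qed
  also have "\<dots> = (real L - 1) * Dc N" using L by simp
  finally show "(\<integral>ps. Gf N L ps \<partial>PsN N) = (real L - 1) * Dc N" .
qed



lemma EVS_le:
  assumes N: "2 \<le> N" and L: "2 \<le> L" and b: "1/2 \<le> \<beta>" "\<beta> < 1"
    and bL: "(1 - \<beta>) * real L \<le> 1 / (4 * real N)" and bE: "1 - \<beta> \<le> exp (1 - real L)"
  shows "EVS N \<beta> \<le> real N + 1 - (real L - 1) * Dc N"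
proof -
  have N1: "1 \<le> N" using N by simp
  have b0: "0 \<le> \<beta>" using b by simp
  define C where "C = 1 / (2 * (1 - \<beta>))"
  have C0: "0 \<le> C" using b by (simp add: C_def)
  have mC: "- 1 / (2 * (1 - \<beta>)) = - C" by (simp add: C_def)
  have intV: "integrable (PsN N) (\<lambda>ps. Vbar \<beta> (yS \<beta> N ps) 1)"
  proof (rule Bochner_Integration.integrable_bound[OF int_S[of N "1 + C"] Vbar_S_meas])
    show "AE ps in PsN N. norm (Vbar \<beta> (yS \<beta> N ps) 1) \<le> norm (Sps N ps + (1 + C))"
    proof (rule AE_I2)
      fix ps :: "nat \<Rightarrow> real"
      have S0: "0 \<le> Sps N ps" by (intro sum_nonneg) (auto simp: pos_def)
      have u: "Vbar \<beta> (yS \<beta> N ps) 1 \<le> Sps N ps + 1"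
        using VS_bounds(1,2)[OF N1 b0 b(2), of ps] by linarith
      have l: "- C \<le> Vbar \<beta> (yS \<beta> N ps) 1"
        using VS_bounds(3)[OF N1 b0 b(2), of ps] mC by simp
      show "norm (Vbar \<beta> (yS \<beta> N ps) 1) \<le> norm (Sps N ps + (1 + C))"
        using u l S0 C0 by simp
    qed
  qed
  have pw: "Vbar \<beta> (yS \<beta> N ps) 1 \<le> Sps N ps + 1 - Gf N L ps" for ps
    using VS_bounds(1)[OF N1 b0 b(2), of ps] VS_G[OF N1 b bL bE, of ps] by linarith
  have "EVS N \<beta> \<le> (\<integral>ps. (Sps N ps + 1) - Gf N L ps \<partial>PsN N)"
    unfolding EVS_def
    by (rule integral_mono[OF intV Bochner_Integration.integrable_diff[OF int_S int_G(1)[OF N1 L]]]) (use pw in simp)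
  also have "\<dots> = (\<integral>ps. Sps N ps + 1 \<partial>PsN N) - (\<integral>ps. Gf N L ps \<partial>PsN N)"
    by (rule Bochner_Integration.integral_diff[OF int_S int_G(1)[OF N1 L]])
  also have "\<dots> = real N + 1 - (real L - 1) * Dc N"
    using int_S_eq int_G(2)[OF N1 L] by simp
  finally show ?thesis .
qed

lemma EVS_unbounded:
  assumes N: "2 \<le> N"
  shows "\<forall>B::real. \<forall>\<^sub>F \<beta> in at_left 1. EVS N \<beta> < B"
proof
  fix B :: real
  have N1: "1 \<le> N" using N by simp
  define D where "D = Dc N"
  have D0: "0 < D" using Dc_pos[OF N1] by (simp add: D_def)
  define L where "L = nat \<lceil>(real N + 1 - B) / D\<rceil> + 2"
  have L2: "2 \<le> L" by (simp add: L_def)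
  have "(real N + 1 - B) / D \<le> real (nat \<lceil>(real N + 1 - B) / D\<rceil>)" by (rule real_nat_ceiling_ge)
  then have "(real N + 1 - B) / D + 1 \<le> real L - 1" by (simp add: L_def)
  then have "((real N + 1 - B) / D + 1) * D \<le> (real L - 1) * D" using D0 by (intro mult_right_mono) auto
  moreover have "((real N + 1 - B) / D + 1) * D = real N + 1 - B + D" using D0 by (simp add: field_simps)
  ultimately have LB: "real N + 1 - (real L - 1) * D < B" using D0 by linarith
  define b where "b = max (1/2) (max (1 - 1 / (4 * real N * real L)) (1 - exp (1 - real L)))"
  have b1: "b < 1" using N L2 by (simp add: b_def)
  show "\<forall>\<^sub>F \<beta> in at_left 1. EVS N \<beta> < B"
    using eventually_at_left_real[OF b1]
  proof (rule eventually_mono)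
    fix \<beta> :: real assume "\<beta> \<in> {b<..<1}"
    then have bb: "b < \<beta>" "\<beta> < 1" by auto
    have h1: "1/2 \<le> \<beta>" using bb by (simp add: b_def)
    have h2: "1 - \<beta> \<le> exp (1 - real L)" using bb by (simp add: b_def)
    have "1 - \<beta> \<le> 1 / (4 * real N * real L)" using bb by (simp add: b_def)
    then have "(1 - \<beta>) * real L \<le> 1 / (4 * real N * real L) * real L"
      by (intro mult_right_mono) auto
    also have "\<dots> = 1 / (4 * real N)" using L2 by simp
    finally have h3: "(1 - \<beta>) * real L \<le> 1 / (4 * real N)" .
    have "EVS N \<beta> \<le> real N + 1 - (real L - 1) * Dc N"
      by (rule EVS_le[OF N L2 h1 bb(2) h3 h2])
    then show "EVS N \<beta> < B" using LB by (simp add: D_def)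
  qed
qed

theorem proposition4:
  fixes N :: nat
  assumes "N \<ge> 2"
  shows "(\<forall>B::real. \<forall>\<^sub>F \<beta> in at_left 1. EVS N \<beta> < B)
       \<and> (\<exists>B::real. \<forall>\<^sub>F \<beta> in at_left 1. \<bar>EVM N \<beta>\<bar> \<le> B)"
  using EVS_unbounded[OF assms] EVM_bounded[OF assms] by blast


end
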